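(* Assume $n=\tilde\Omega(dL^2)$ and $\|I-A\|_{op}\ge\Theta\Big(\sqrt{\frac{L^2d\log^2d}{n}}\Big)$. Then for each integer $0\le i\le 2L-1$, $$\mathbb E\big[(I-SA)^iS(I-SA)^{2L-1-i}\big]=(I-A)^{2L-1}+\|I-A\|^{2L-1}\Delta,$$ where $\Delta$ has operator norm $O\big(\frac1{\log d}\big)$.
   Context: $S=\frac1n\sum_{i=1}^n\mathbf x_i\mathbf x_i^\top$ with $\mathbf x_i$ i.i.d. $\mathcal N(0,I_d)$. $A\in\mathbb R^{d\times d}$ is a (symmetric) parameter matrix and $L\ge1$ is an integer. $\|\cdot\|$ denotes the operator norm, and asymptotic notation is in $d$; $\tilde\Omega$ hides logarithmic factors. *)

theory Defs
  imports "HOL-Probability.Probability"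
begin

text \<open>d x d real matrices are represented as functions nat => nat => real; only entries
with indices < d are relevant.\<close>

definition mat_id :: "nat \<Rightarrow> nat \<Rightarrow> real" where
  "mat_id = (\<lambda>i j. if i = j then 1 else 0)"

definition mat_mult :: "nat \<Rightarrow> (nat \<Rightarrow> nat \<Rightarrow> real) \<Rightarrow> (nat \<Rightarrow> nat \<Rightarrow> real) \<Rightarrow> (nat \<Rightarrow> nat \<Rightarrow> real)" where
  "mat_mult d M N = (\<lambda>i j. \<Sum>k<d. M i k * N k j)"

fun mat_pow :: "nat \<Rightarrow> (nat \<Rightarrow> nat \<Rightarrow> real) \<Rightarrow> nat \<Rightarrow> (nat \<Rightarrow> nat \<Rightarrow> real)" where
  "mat_pow d M 0 = mat_id"
| "mat_pow d M (Suc k) = mat_mult d (mat_pow d M k) M"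

definition mat_sub :: "(nat \<Rightarrow> nat \<Rightarrow> real) \<Rightarrow> (nat \<Rightarrow> nat \<Rightarrow> real) \<Rightarrow> (nat \<Rightarrow> nat \<Rightarrow> real)" where
  "mat_sub M N = (\<lambda>i j. M i j - N i j)"

definition op_norm :: "nat \<Rightarrow> (nat \<Rightarrow> nat \<Rightarrow> real) \<Rightarrow> real" where
  "op_norm d M = Sup ((\<lambda>v. sqrt (\<Sum>i<d. (\<Sum>j<d. M i j * v j)\<^sup>2)) ` {v. (\<Sum>j<d. (v j)\<^sup>2) = 1})"

definition sym_mat :: "nat \<Rightarrow> (nat \<Rightarrow> nat \<Rightarrow> real) \<Rightarrow> bool" where
  "sym_mat d M \<longleftrightarrow> (\<forall>i<d. \<forall>j<d. M i j = M j i)"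

text \<open>Sample space: \<omega> (k, j) is the j-th coordinate of the k-th sample x_k, all i.i.d. N(0,1),
so x_1..x_n are i.i.d. N(0, I_d).\<close>
definition gauss_samples :: "nat \<Rightarrow> nat \<Rightarrow> (nat \<times> nat \<Rightarrow> real) measure" where
  "gauss_samples n d = PiM ({..<n} \<times> {..<d}) (\<lambda>_. density lborel std_normal_density)"

definition emp_cov :: "nat \<Rightarrow> nat \<Rightarrow> (nat \<times> nat \<Rightarrow> real) \<Rightarrow> (nat \<Rightarrow> nat \<Rightarrow> real)" where
  "emp_cov n d \<omega> = (\<lambda>i j. (1 / real n) * (\<Sum>k<n. \<omega> (k, i) * \<omega> (k, j)))"

definition mat_expect :: "nat \<Rightarrow> nat \<Rightarrow> ((nat \<times> nat \<Rightarrow> real) \<Rightarrow> (nat \<Rightarrow> nat \<Rightarrow> real)) \<Rightarrow> (nat \<Rightarrow> nat \<Rightarrow> real)" where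
  "mat_expect n d F = (\<lambda>i j. integral\<^sup>L (gauss_samples n d) (\<lambda>\<omega>. F \<omega> i j))"

end

theory Submission
  imports Defs
begin

definition nv :: "nat \<Rightarrow> (nat \<Rightarrow> real) \<Rightarrow> real" where
  "nv d v = L2_set v {..<d}"

definition mv :: "nat \<Rightarrow> (nat \<Rightarrow> nat \<Rightarrow> real) \<Rightarrow> (nat \<Rightarrow> real) \<Rightarrow> (nat \<Rightarrow> real)" where
  "mv d M v = (\<lambda>i. \<Sum>j<d. M i j * v j)"

definition eqd :: "nat \<Rightarrow> (nat \<Rightarrow> nat \<Rightarrow> real) \<Rightarrow> (nat \<Rightarrow> nat \<Rightarrow> real) \<Rightarrow> bool" where
  "eqd d M N \<longleftrightarrow> (\<forall>i<d. \<forall>j<d. M i j = N i j)"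

definition frob :: "nat \<Rightarrow> (nat \<Rightarrow> nat \<Rightarrow> real) \<Rightarrow> real" where
  "frob d M = L2_set (\<lambda>i. L2_set (M i) {..<d}) {..<d}"

lemma op_norm_alt: "op_norm d M = Sup ((\<lambda>v. nv d (mv d M v)) ` {v. nv d v = 1})"
proof -
  have "{v. (\<Sum>j<d. (v j)\<^sup>2) = 1} = {v. nv d v = 1}"
    by (auto simp: nv_def L2_set_def)
  then show ?thesis unfolding op_norm_def nv_def mv_def L2_set_def by simp
qed

lemma L2_abs: "L2_set (\<lambda>i. \<bar>f i\<bar>) A = L2_set f A"
  by (simp add: L2_set_def)

lemma abs_mv_le: "\<bar>mv d M v i\<bar> \<le> L2_set (M i) {..<d} * nv d v"
proof -
  have "\<bar>mv d M v i\<bar> \<le> (\<Sum>j<d. \<bar>M i j\<bar> * \<bar>v j\<bar>)"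
    unfolding mv_def by (rule order_trans[OF sum_abs]) (simp add: abs_mult)
  also have "\<dots> \<le> L2_set (M i) {..<d} * nv d v"
    unfolding nv_def by (rule L2_set_mult_ineq)
  finally show ?thesis .
qed

lemma nv_mv_frob: "nv d (mv d M v) \<le> frob d M * nv d v"
proof -
  have "nv d (mv d M v) = L2_set (\<lambda>i. \<bar>mv d M v i\<bar>) {..<d}"
    by (simp add: nv_def L2_abs)
  also have "\<dots> \<le> L2_set (\<lambda>i. L2_set (M i) {..<d} * nv d v) {..<d}"
    by (rule L2_set_mono) (auto simp: abs_mv_le)
  also have "\<dots> = frob d M * nv d v"
    unfolding frob_def by (subst L2_set_left_distrib) (auto simp: nv_def)
  finally show ?thesis .
qed

lemma bdd_opn: "bdd_above ((\<lambda>v. nv d (mv d M v)) ` {v. nv d v = 1})"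
proof (rule bdd_aboveI[of _ "frob d M"])
  fix x assume "x \<in> (\<lambda>v. nv d (mv d M v)) ` {v. nv d v = 1}"
  then obtain v where "nv d v = 1" "x = nv d (mv d M v)" by auto
  then show "x \<le> frob d M" using nv_mv_frob[of d M v] by simp
qed

definition e0 :: "nat \<Rightarrow> real" where "e0 = (\<lambda>j. if j = 0 then 1 else 0)"

lemma nv_e0: "0 < d \<Longrightarrow> nv d e0 = 1"
proof -
  assume "0 < d"
  then have "(\<Sum>j<d. (e0 j)\<^sup>2) = (\<Sum>j\<in>{0}. (e0 j)\<^sup>2)"
    by (intro sum.mono_neutral_right) (auto simp: e0_def)
  then show ?thesis by (simp add: nv_def L2_set_def e0_def)
qed

lemma nv_nonneg[simp]: "0 \<le> nv d v" by (simp add: nv_def)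

lemma opn_nonneg: "0 < d \<Longrightarrow> 0 \<le> op_norm d M"
proof -
  assume d: "0 < d"
  have "nv d (mv d M e0) \<le> op_norm d M"
    unfolding op_norm_alt by (rule cSup_upper[OF _ bdd_opn]) (use nv_e0[OF d] in auto)
  then show ?thesis using nv_nonneg[of d "mv d M e0"] by linarith
qed

lemma opn_le:
  assumes "0 < d" "\<And>v. nv d v = 1 \<Longrightarrow> nv d (mv d M v) \<le> K"
  shows "op_norm d M \<le> K"
  unfolding op_norm_alt
  by (rule cSup_least) (use assms nv_e0 in auto)

lemma nv_scale: "0 \<le> c \<Longrightarrow> nv d (\<lambda>j. c * v j) = c * nv d v"
  unfolding nv_def by (simp add: L2_set_right_distrib)

lemma nv_zero_iff: "nv d v = 0 \<longleftrightarrow> (\<forall>j<d. v j = 0)"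
  unfolding nv_def by (subst L2_set_eq_0_iff) auto

lemma mv_scale: "mv d M (\<lambda>j. c * v j) = (\<lambda>i. c * mv d M v i)"
  unfolding mv_def by (auto simp: sum_distrib_left algebra_simps)

lemma opn_apply:
  assumes d: "0 < d"
  shows "nv d (mv d M v) \<le> op_norm d M * nv d v"
proof (cases "nv d v = 0")
  case True
  then have "\<forall>j<d. v j = 0" by (simp add: nv_zero_iff)
  then have "mv d M v = (\<lambda>i. 0)" unfolding mv_def by (auto intro!: ext sum.neutral)
  then have "nv d (mv d M v) = 0" by (simp add: nv_def L2_set_def)
  then show ?thesis using True by simp
next
  case False
  define t where "t = nv d v"
  have t: "0 < t" using False nv_nonneg[of d v] unfolding t_def by linarith
  define u where "u = (\<lambda>j. (1/t) * v j)"
  have "nv d u = 1" unfolding u_def using t by (subst nv_scale) (auto simp: t_def)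
  then have "nv d (mv d M u) \<le> op_norm d M"
    unfolding op_norm_alt by (intro cSup_upper[OF _ bdd_opn]) auto
  moreover have "nv d (mv d M u) = (1/t) * nv d (mv d M v)"
    unfolding u_def mv_scale using t by (subst nv_scale) auto
  ultimately have "(1/t) * nv d (mv d M v) \<le> op_norm d M" by simp
  then show ?thesis using t unfolding t_def[symmetric] by (simp add: field_simps)
qed

lemma eqd_refl[simp]: "eqd d M M" by (simp add: eqd_def)
lemma eqd_sym: "eqd d M N \<Longrightarrow> eqd d N M" by (simp add: eqd_def)
lemma eqd_trans: "eqd d M N \<Longrightarrow> eqd d N P \<Longrightarrow> eqd d M P" by (simp add: eqd_def)

lemma opn_cong: "eqd d M N \<Longrightarrow> op_norm d M = op_norm d N"
proof -
  assume e: "eqd d M N"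
  have "nv d (mv d M v) = nv d (mv d N v)" for v
    unfolding nv_def mv_def using e by (intro L2_set_cong) (auto simp: eqd_def)
  then show ?thesis unfolding op_norm_alt by simp
qed

definition mat_add :: "(nat \<Rightarrow> nat \<Rightarrow> real) \<Rightarrow> (nat \<Rightarrow> nat \<Rightarrow> real) \<Rightarrow> (nat \<Rightarrow> nat \<Rightarrow> real)" where
  "mat_add M N = (\<lambda>i j. M i j + N i j)"

definition mat_neg :: "(nat \<Rightarrow> nat \<Rightarrow> real) \<Rightarrow> (nat \<Rightarrow> nat \<Rightarrow> real)" where
  "mat_neg M = (\<lambda>i j. - M i j)"

lemma mv_add: "mv d (mat_add M N) v = (\<lambda>i. mv d M v i + mv d N v i)"
  unfolding mv_def mat_add_def by (auto simp: sum.distrib algebra_simps)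

lemma mv_sub: "mv d (mat_sub M N) v = (\<lambda>i. mv d M v i - mv d N v i)"
  unfolding mv_def mat_sub_def by (auto simp: sum_subtractf algebra_simps)

lemma mv_neg: "mv d (mat_neg M) v = (\<lambda>i. - mv d M v i)"
  unfolding mv_def mat_neg_def by (auto simp: sum_negf)

lemma mv_mult: "mv d (mat_mult d M N) v = mv d M (mv d N v)"
  unfolding mv_def mat_mult_def
  by (auto simp: sum_distrib_left sum_distrib_right mult.assoc intro!: ext sum.swap[THEN trans])

lemma opn_add: "0 < d \<Longrightarrow> op_norm d (mat_add M N) \<le> op_norm d M + op_norm d N"
proof (rule opn_le)
  fix v assume d: "0 < d" and v: "nv d v = 1"
  have "nv d (mv d (mat_add M N) v) \<le> nv d (mv d M v) + nv d (mv d N v)"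
    unfolding mv_add nv_def by (rule L2_set_triangle_ineq)
  also have "\<dots> \<le> op_norm d M + op_norm d N"
    using opn_apply[OF d, of M v] opn_apply[OF d, of N v] v by simp
  finally show "nv d (mv d (mat_add M N) v) \<le> op_norm d M + op_norm d N" .
qed

lemma nv_neg: "nv d (\<lambda>i. - v i) = nv d v" by (simp add: nv_def L2_set_def)

lemma opn_neg: "0 < d \<Longrightarrow> op_norm d (mat_neg M) \<le> op_norm d M"
proof (rule opn_le)
  fix v assume d: "0 < d" and v: "nv d v = 1"
  show "nv d (mv d (mat_neg M) v) \<le> op_norm d M"
    unfolding mv_neg nv_neg using opn_apply[OF d, of M v] v by simp
qed

lemma opn_sub: "0 < d \<Longrightarrow> op_norm d (mat_sub M N) \<le> op_norm d M + op_norm d N"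
proof -
  assume d: "0 < d"
  have "mat_sub M N = mat_add M (mat_neg N)" by (auto simp: mat_sub_def mat_add_def mat_neg_def)
  then show ?thesis using opn_add[OF d, of M "mat_neg N"] opn_neg[OF d, of N] by simp
qed

lemma opn_mult: "0 < d \<Longrightarrow> op_norm d (mat_mult d M N) \<le> op_norm d M * op_norm d N"
proof (rule opn_le)
  fix v assume d: "0 < d" and v: "nv d v = 1"
  have "nv d (mv d (mat_mult d M N) v) \<le> op_norm d M * nv d (mv d N v)"
    unfolding mv_mult by (rule opn_apply[OF d])
  also have "\<dots> \<le> op_norm d M * op_norm d N"
    using opn_apply[OF d, of N v] v opn_nonneg[OF d, of M] by (simp add: mult_left_mono)
  finally show "nv d (mv d (mat_mult d M N) v) \<le> op_norm d M * op_norm d N" .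
qed

lemma mv_id: "i < d \<Longrightarrow> mv d mat_id v i = v i"
  unfolding mv_def mat_id_def
  by (simp add: if_distrib[where f = "\<lambda>x. x * _"] sum.delta cong: if_cong)

lemma opn_id: "0 < d \<Longrightarrow> op_norm d mat_id \<le> 1"
proof (rule opn_le)
  fix v assume d: "0 < d" and v: "nv d v = 1"
  have "nv d (mv d mat_id v) = nv d v" unfolding nv_def by (rule L2_set_cong) (auto simp: mv_id)
  then show "nv d (mv d mat_id v) \<le> 1" using v by simp
qed

lemma opn_zero: "0 < d \<Longrightarrow> op_norm d (\<lambda>i j. 0) \<le> 0"
  by (rule opn_le) (auto simp: mv_def nv_def L2_set_def)

definition bil :: "nat \<Rightarrow> (nat \<Rightarrow> real) \<Rightarrow> (nat \<Rightarrow> nat \<Rightarrow> real) \<Rightarrow> (nat \<Rightarrow> real) \<Rightarrow> real" where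
  "bil d w M v = (\<Sum>i<d. w i * mv d M v i)"

lemma abs_inner_le: "\<bar>\<Sum>i<d. w i * u i\<bar> \<le> nv d w * nv d u"
proof -
  have "\<bar>\<Sum>i<d. w i * u i\<bar> \<le> (\<Sum>i<d. \<bar>w i\<bar> * \<bar>u i\<bar>)"
    by (rule order_trans[OF sum_abs]) (simp add: abs_mult)
  also have "\<dots> \<le> nv d w * nv d u" unfolding nv_def by (rule L2_set_mult_ineq)
  finally show ?thesis .
qed

lemma abs_bil_le: "0 < d \<Longrightarrow> \<bar>bil d w M v\<bar> \<le> nv d w * op_norm d M * nv d v"
proof -
  assume d: "0 < d"
  have "\<bar>bil d w M v\<bar> \<le> nv d w * nv d (mv d M v)" unfolding bil_def by (rule abs_inner_le)
  also have "\<dots> \<le> nv d w * (op_norm d M * nv d v)"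
    by (rule mult_left_mono[OF opn_apply[OF d]]) simp
  finally show ?thesis by (simp add: mult.assoc)
qed

lemma pb_comp:
  assumes d: "0 < d"
    and h1: "op_norm d (mat_sub P1 Q1) \<le> p1 - q1" "op_norm d Q1 \<le> q1"
    and h2: "op_norm d (mat_sub P2 Q2) \<le> p2 - q2" "op_norm d Q2 \<le> q2"
  shows "op_norm d (mat_sub (mat_mult d P1 P2) (mat_mult d Q1 Q2)) \<le> p1 * p2 - q1 * q2
       \<and> op_norm d (mat_mult d Q1 Q2) \<le> q1 * q2"
proof -
  have n1: "0 \<le> op_norm d (mat_sub P1 Q1)" "0 \<le> op_norm d Q1" "0 \<le> op_norm d (mat_sub P2 Q2)" "0 \<le> op_norm d Q2"
    using opn_nonneg[OF d] by auto
  have P2: "P2 = mat_add (mat_sub P2 Q2) Q2" by (auto simp: mat_add_def mat_sub_def)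
  have nP2: "op_norm d P2 \<le> p2"
    using opn_add[OF d, of "mat_sub P2 Q2" Q2] P2 h2 by simp
  have nP2': "0 \<le> op_norm d P2" using opn_nonneg[OF d] by auto
  have eq: "mat_sub (mat_mult d P1 P2) (mat_mult d Q1 Q2) =
      mat_add (mat_mult d (mat_sub P1 Q1) P2) (mat_mult d Q1 (mat_sub P2 Q2))"
    by (auto simp: mat_add_def mat_sub_def mat_mult_def sum_subtractf[symmetric] sum.distrib[symmetric]
         algebra_simps intro!: ext sum.cong)
  have a: "op_norm d (mat_mult d (mat_sub P1 Q1) P2) \<le> (p1 - q1) * p2"
    by (rule order_trans[OF opn_mult[OF d]]) (rule mult_mono, use h1 nP2 n1 nP2' in auto)
  have b: "op_norm d (mat_mult d Q1 (mat_sub P2 Q2)) \<le> q1 * (p2 - q2)"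
    by (rule order_trans[OF opn_mult[OF d]]) (rule mult_mono, use h1 h2 n1 in auto)
  have c: "op_norm d (mat_mult d Q1 Q2) \<le> q1 * q2"
    by (rule order_trans[OF opn_mult[OF d]]) (rule mult_mono, use h1 h2 n1 in auto)
  have "op_norm d (mat_sub (mat_mult d P1 P2) (mat_mult d Q1 Q2)) \<le> (p1 - q1) * p2 + q1 * (p2 - q2)"
    unfolding eq by (rule order_trans[OF opn_add[OF d]]) (use a b in linarith)
  also have "\<dots> = p1 * p2 - q1 * q2" by (simp add: algebra_simps)
  finally show ?thesis using c by simp
qed

lemma sub_self_zero: "mat_sub M M = (\<lambda>i j. 0)" by (auto simp: mat_sub_def)

lemma pb_pow:
  assumes d: "0 < d"
    and h2: "op_norm d (mat_sub P Q) \<le> p - q" "op_norm d Q \<le> q"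
  shows "op_norm d (mat_sub (mat_pow d P k) (mat_pow d Q k)) \<le> p ^ k - q ^ k
       \<and> op_norm d (mat_pow d Q k) \<le> q ^ k"
proof (induction k)
  case 0
  then show ?case using opn_zero[OF d] opn_id[OF d] by (simp add: sub_self_zero)
next
  case (Suc k)
  then show ?case using pb_comp[OF d _ _ h2, of "mat_pow d P k" "mat_pow d Q k" "p ^ k" "q ^ k"]
    by (simp add: mult.commute)
qed

lemma eqd_mult: "eqd d M M' \<Longrightarrow> eqd d N N' \<Longrightarrow> eqd d (mat_mult d M N) (mat_mult d M' N')"
  by (auto simp: eqd_def mat_mult_def intro!: sum.cong)

lemma eqd_sub: "eqd d M M' \<Longrightarrow> eqd d N N' \<Longrightarrow> eqd d (mat_sub M N) (mat_sub M' N')"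
  by (auto simp: eqd_def mat_sub_def)

lemma mult_assoc: "mat_mult d (mat_mult d M N) P = mat_mult d M (mat_mult d N P)"
  unfolding mat_mult_def
  by (auto simp: sum_distrib_left sum_distrib_right mult.assoc intro!: ext sum.swap[THEN trans])

lemma mult_id_right: "eqd d (mat_mult d M mat_id) M"
  unfolding eqd_def mat_mult_def mat_id_def
  by (simp add: if_distrib[where f = "\<lambda>x. _ * x"] cong: if_cong)

lemma mult_id_left: "eqd d (mat_mult d mat_id M) M"
  unfolding eqd_def mat_mult_def mat_id_def
  by (simp add: if_distrib[where f = "\<lambda>x. x * _"] cong: if_cong)

lemma pow_add: "eqd d (mat_pow d M (i + j)) (mat_mult d (mat_pow d M i) (mat_pow d M j))"
proof (induction j)
  case 0
  then show ?case using eqd_sym[OF mult_id_right] by simp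
next
  case (Suc j)
  have "eqd d (mat_pow d M (i + Suc j)) (mat_mult d (mat_mult d (mat_pow d M i) (mat_pow d M j)) M)"
    using eqd_mult[OF Suc eqd_refl[of d M]] by simp
  then show ?case by (simp add: mult_assoc)
qed

lemma nv_sq: "(nv d x)\<^sup>2 = (\<Sum>j<d. (x j)\<^sup>2)"
  unfolding nv_def L2_set_def by (simp add: sum_nonneg)

lemma bil_expand: "bil d w M v = (\<Sum>i<d. \<Sum>j<d. w i * M i j * v j)"
  unfolding bil_def mv_def by (simp add: sum_distrib_left mult.assoc)

lemma bil_sym: "sym_mat d M \<Longrightarrow> bil d w M v = bil d v M w"
  unfolding bil_expand sym_mat_def
  by (subst sum.swap) (auto intro!: sum.cong simp: algebra_simps)

lemma bil_diff_left: "bil d (\<lambda>i. a i - b i) M v = bil d a M v - bil d b M v"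
  unfolding bil_expand by (simp add: algebra_simps sum_subtractf)

lemma bil_diff_right: "bil d w M (\<lambda>i. a i - b i) = bil d w M a - bil d w M b"
  unfolding bil_expand by (simp add: algebra_simps sum_subtractf)

lemma bil_add_left: "bil d (\<lambda>i. a i + b i) M v = bil d a M v + bil d b M v"
  unfolding bil_expand by (simp add: algebra_simps sum.distrib)

lemma bil_add_right: "bil d w M (\<lambda>i. a i + b i) = bil d w M a + bil d w M b"
  unfolding bil_expand by (simp add: algebra_simps sum.distrib)

lemma bil_scale: "bil d (\<lambda>i. c * a i) M (\<lambda>i. c * a i) = c\<^sup>2 * bil d a M a"
  unfolding bil_expand by (simp add: sum_distrib_left power2_eq_square algebra_simps)

lemma sym_opn_le:
  assumes d: "0 < d" and s: "sym_mat d M" and K: "0 \<le> K"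
    and q: "\<And>x. \<bar>bil d x M x\<bar> \<le> K * (nv d x)\<^sup>2"
  shows "op_norm d M \<le> K"
proof (rule opn_le[OF d])
  fix v assume v: "nv d v = 1"
  define u where "u = mv d M v"
  define t where "t = nv d u"
  show "nv d (mv d M v) \<le> K"
  proof (cases "t = 0")
    case True then show ?thesis using K by (simp add: t_def u_def)
  next
    case False
    then have t: "0 < t" using nv_nonneg[of d u] unfolding t_def by linarith
    define w where "w = (\<lambda>i. (1/t) * u i)"
    have "bil d w M v = (\<Sum>i<d. (1/t) * (u i)\<^sup>2)"
      unfolding bil_def w_def u_def by (simp add: power2_eq_square)
    also have "\<dots> = (1/t) * t\<^sup>2" by (simp add: sum_divide_distrib[symmetric] t_def nv_sq)
    also have "\<dots> = t" using t by (simp add: power2_eq_square)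
    finally have bw: "bil d w M v = t" .
    have nw: "nv d w = 1" unfolding w_def using t by (subst nv_scale) (auto simp: t_def)
    have pol: "4 * bil d w M v = bil d (\<lambda>i. w i + v i) M (\<lambda>i. w i + v i) - bil d (\<lambda>i. w i - v i) M (\<lambda>i. w i - v i)"
      unfolding bil_add_left bil_add_right bil_diff_left bil_diff_right using bil_sym[OF s, of v w] by simp
    have par: "(nv d (\<lambda>i. w i + v i))\<^sup>2 + (nv d (\<lambda>i. w i - v i))\<^sup>2 = 2 * (nv d w)\<^sup>2 + 2 * (nv d v)\<^sup>2"
      unfolding nv_sq by (simp add: sum.distrib[symmetric] sum_distrib_left power2_eq_square algebra_simps)
    have "4 * t \<le> K * (nv d (\<lambda>i. w i + v i))\<^sup>2 + K * (nv d (\<lambda>i. w i - v i))\<^sup>2"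
      using pol bw q[of "\<lambda>i. w i + v i"] q[of "\<lambda>i. w i - v i"] by linarith
    also have "\<dots> = K * ((nv d (\<lambda>i. w i + v i))\<^sup>2 + (nv d (\<lambda>i. w i - v i))\<^sup>2)"
      by (simp add: algebra_simps)
    also have "\<dots> = 4 * K" unfolding par using nw v by simp
    finally show ?thesis by (simp add: t_def u_def)
  qed
qed

lemma net_opn:
  assumes d: "0 < d" and s: "sym_mat d M" and Q: "0 \<le> Q"
    and net: "\<And>v. nv d v = 1 \<Longrightarrow> \<exists>z\<in>N. nv d (\<lambda>i. v i - z i) \<le> 1/8 \<and> nv d z \<le> 9/8"
    and bd: "\<And>z. z \<in> N \<Longrightarrow> \<bar>bil d z M z\<bar> \<le> Q"
  shows "op_norm d M \<le> 2 * Q"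
proof -
  define K where "K = Q + (17/64) * op_norm d M"
  have on: "0 \<le> op_norm d M" using opn_nonneg[OF d] .
  have unit: "\<bar>bil d v M v\<bar> \<le> K" if v: "nv d v = 1" for v
  proof -
    obtain z where z: "z \<in> N" "nv d (\<lambda>i. v i - z i) \<le> 1/8" "nv d z \<le> 9/8" using net[OF v] by blast
    have eq: "bil d v M v = bil d z M z + bil d (\<lambda>i. v i - z i) M v + bil d z M (\<lambda>i. v i - z i)"
      unfolding bil_diff_left bil_diff_right by simp
    have a: "\<bar>bil d (\<lambda>i. v i - z i) M v\<bar> \<le> (1/8) * op_norm d M"
    proof -
      have "\<bar>bil d (\<lambda>i. v i - z i) M v\<bar> \<le> nv d (\<lambda>i. v i - z i) * op_norm d M * nv d v"
        by (rule abs_bil_le[OF d])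
      also have "\<dots> \<le> (1/8) * op_norm d M * 1"
        using z v on by (intro mult_mono) auto
      finally show ?thesis by simp
    qed
    have b: "\<bar>bil d z M (\<lambda>i. v i - z i)\<bar> \<le> (9/8) * op_norm d M * (1/8)"
    proof -
      have "\<bar>bil d z M (\<lambda>i. v i - z i)\<bar> \<le> nv d z * op_norm d M * nv d (\<lambda>i. v i - z i)"
        by (rule abs_bil_le[OF d])
      also have "\<dots> \<le> (9/8) * op_norm d M * (1/8)"
        using z v on by (intro mult_mono) auto
      finally show ?thesis by simp
    qed
    show ?thesis using eq a b bd[OF z(1)] unfolding K_def by linarith
  qed
  have K0: "0 \<le> K" unfolding K_def using Q on by simp
  have q: "\<bar>bil d x M x\<bar> \<le> K * (nv d x)\<^sup>2" for x
  proof (cases "nv d x = 0")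
    case True
    then have "\<forall>j<d. x j = 0" by (simp add: nv_zero_iff)
    then have "bil d x M x = 0" by (simp add: bil_expand)
    then show ?thesis using True by simp
  next
    case False
    define t where "t = nv d x"
    have t: "0 < t" using False nv_nonneg[of d x] unfolding t_def by linarith
    define v where "v = (\<lambda>i. (1/t) * x i)"
    have nv1: "nv d v = 1" unfolding v_def using t by (subst nv_scale) (auto simp: t_def)
    have xv: "x = (\<lambda>i. t * v i)" unfolding v_def using t by auto
    have "bil d x M x = t\<^sup>2 * bil d v M v" unfolding xv bil_scale ..
    then have "\<bar>bil d x M x\<bar> = t\<^sup>2 * \<bar>bil d v M v\<bar>" by (simp add: abs_mult)
    also have "\<dots> \<le> t\<^sup>2 * K" using unit[OF nv1] by (simp add: mult_left_mono)
    finally show ?thesis by (simp add: t_def mult.commute)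
  qed
  have "op_norm d M \<le> K" by (rule sym_opn_le[OF d s K0 q])
  then show ?thesis unfolding K_def using Q on by linarith
qed

definition gridh :: "nat \<Rightarrow> real" where "gridh d = 1 / (8 * sqrt (real d))"

definition MS :: "nat \<Rightarrow> (nat \<Rightarrow> int) set" where
  "MS d = {m \<in> PiE {..<d} (\<lambda>_. {-(9 * int d)..9 * int d}). (\<Sum>j<d. \<bar>m j\<bar>) \<le> 9 * int d}"

definition net :: "nat \<Rightarrow> (nat \<Rightarrow> real) set" where
  "net d = (\<lambda>m. \<lambda>j. gridh d * of_int (m j)) ` MS d"

lemma finite_MS: "finite (MS d)"
  unfolding MS_def by (auto intro!: finite_PiE)

lemma finite_net: "finite (net d)"
  unfolding net_def using finite_MS by simp

lemma geom_sum_bound: "(\<Sum>t\<in>{-int R..int R}. exp (- real_of_int \<bar>t\<bar>)) \<le> 3 - 2 * (1/2) ^ R"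
proof (induction R)
  case 0
  then show ?case by simp
next
  case (Suc R)
  have set: "{-int (Suc R)..int (Suc R)} = insert (-int (Suc R)) (insert (int (Suc R)) {-int R..int R})"
    by auto
  have e: "exp (- real (Suc R)) \<le> (1/2) ^ Suc R"
  proof -
    have "exp (- real (Suc R)) = exp (-1) ^ Suc R"
      by (subst exp_of_nat_mult[symmetric]) simp
    also have "\<dots> \<le> (1/2) ^ Suc R"
    proof (rule power_mono)
      have "2 \<le> exp (1::real)" using exp_ge_add_one_self[of 1] by simp
      then show "exp (-1) \<le> (1/2::real)" by (simp add: exp_minus field_simps)
    qed simp
    finally show ?thesis .
  qed
  have "(\<Sum>t\<in>{-int (Suc R)..int (Suc R)}. exp (- real_of_int \<bar>t\<bar>))
       = exp (- real (Suc R)) + exp (- real (Suc R)) + (\<Sum>t\<in>{-int R..int R}. exp (- real_of_int \<bar>t\<bar>))"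
    unfolding set by (subst sum.insert; simp)+
  also have "\<dots> \<le> 2 * (1/2) ^ Suc R + (3 - 2 * (1/2) ^ R)" using e Suc by linarith
  also have "\<dots> = 3 - 2 * (1/2) ^ Suc R" by simp
  finally show ?case .
qed

lemma card_MS: "real (card (MS d)) \<le> exp (11 * real d)"
proof -
  define R where "R = 9 * int d"
  define B where "B = PiE {..<d} (\<lambda>_::nat. {-R..R})"
  have fB: "finite B" unfolding B_def by (auto intro!: finite_PiE)
  have MSB: "MS d = {m \<in> B. (\<Sum>j<d. \<bar>m j\<bar>) \<le> R}" unfolding MS_def B_def R_def by simp
  have "real (card (MS d)) = (\<Sum>m\<in>MS d. 1)" by simp
  also have "\<dots> \<le> (\<Sum>m\<in>MS d. exp (real_of_int R - (\<Sum>j<d. real_of_int \<bar>m j\<bar>)))"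
  proof (rule sum_mono)
    fix m assume "m \<in> MS d"
    then have "(\<Sum>j<d. \<bar>m j\<bar>) \<le> R" unfolding MSB by simp
    then have "(\<Sum>j<d. real_of_int \<bar>m j\<bar>) \<le> real_of_int R"
      by (metis of_int_le_iff of_int_sum)
    then show "1 \<le> exp (real_of_int R - (\<Sum>j<d. real_of_int \<bar>m j\<bar>))" by simp
  qed
  also have "\<dots> \<le> (\<Sum>m\<in>B. exp (real_of_int R - (\<Sum>j<d. real_of_int \<bar>m j\<bar>)))"
    by (rule sum_mono2[OF fB]) (auto simp: MSB)
  also have "\<dots> = exp (real_of_int R) * (\<Sum>m\<in>B. \<Prod>j<d. exp (- real_of_int \<bar>m j\<bar>))"
  proof -
    have "exp (real_of_int R - (\<Sum>j<d. real_of_int \<bar>m j\<bar>)) = exp (real_of_int R) * (\<Prod>j<d. exp (- real_of_int \<bar>m j\<bar>))" for m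
    proof -
      have "real_of_int R - (\<Sum>j<d. real_of_int \<bar>m j\<bar>) = real_of_int R + (\<Sum>j<d. - real_of_int \<bar>m j\<bar>)"
        by (simp add: sum_negf)
      then show ?thesis by (simp only: exp_add exp_sum[OF finite_lessThan])
    qed
    then show ?thesis by (simp add: sum_distrib_left)
  qed
  also have "(\<Sum>m\<in>B. \<Prod>j<d. exp (- real_of_int \<bar>m j\<bar>)) = (\<Prod>j<d. \<Sum>t\<in>{-R..R}. exp (- real_of_int \<bar>t\<bar>))"
    unfolding B_def by (subst prod_sum_PiE) auto
  also have "\<dots> \<le> (\<Prod>j<d. (3::real))"
  proof (rule prod_mono)
    fix j
    have "R = int (9 * d)" unfolding R_def by simp
    then have "(\<Sum>t\<in>{-R..R}. exp (- real_of_int \<bar>t\<bar>)) \<le> 3 - 2 * (1/2) ^ (9 * d)"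
      using geom_sum_bound[of "9 * d"] by simp
    moreover have "0 \<le> (1/2::real) ^ (9 * d)" by simp
    moreover have "0 \<le> (\<Sum>t\<in>{-R..R}. exp (- real_of_int \<bar>t\<bar>))" by (rule sum_nonneg) simp
    ultimately show "0 \<le> (\<Sum>t\<in>{-R..R}. exp (- real_of_int \<bar>t\<bar>)) \<and> (\<Sum>t\<in>{-R..R}. exp (- real_of_int \<bar>t\<bar>)) \<le> 3"
      by linarith
  qed
  finally have c: "real (card (MS d)) \<le> exp (real_of_int R) * 3 ^ d" by simp
  have "(3::real) ^ d \<le> exp 2 ^ d"
  proof (rule power_mono)
    have e1: "2 \<le> exp (1::real)" using exp_ge_add_one_self[of 1] by simp
    have "exp (2::real) = exp 1 * exp 1" by (simp add: exp_add[symmetric])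
    also have "\<dots> \<ge> 2 * 2" using e1 by (intro mult_mono) auto
    finally show "3 \<le> exp (2::real)" by simp
  qed simp
  then have "exp (real_of_int R) * 3 ^ d \<le> exp (real_of_int R) * exp 2 ^ d" by simp
  also have "\<dots> = exp (11 * real d)" unfolding R_def by (simp add: exp_of_nat_mult[symmetric] exp_add[symmetric])
  finally show ?thesis using c by linarith
qed

lemma card_net: "real (card (net d)) \<le> exp (11 * real d)"
  using card_image_le[OF finite_MS, of "\<lambda>m. \<lambda>j. gridh d * of_int (m j)" d] card_MS[of d]
  unfolding net_def by linarith

lemma floor_abs_le: "\<bar>real_of_int \<lfloor>x\<rfloor>\<bar> \<le> \<bar>x\<bar> + 1"
  by linarith

lemma net_prop:
  assumes d: "0 < d" and v: "nv d v = 1"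
  shows "\<exists>z\<in>net d. nv d (\<lambda>i. v i - z i) \<le> 1/8 \<and> nv d z \<le> 9/8"
proof -
  define h where "h = gridh d"
  have sd: "0 < sqrt (real d)" using d by simp
  have h: "0 < h" unfolding h_def gridh_def using sd by simp
  have hd: "h * sqrt (real d) = 1/8" unfolding h_def gridh_def using sd by simp
  have hsq: "real d * h\<^sup>2 = 1/64"
  proof -
    have "real d * h\<^sup>2 = (h * sqrt (real d))\<^sup>2" by (simp add: power_mult_distrib)
    then show ?thesis unfolding hd by (simp add: power2_eq_square)
  qed
  define m where "m = restrict (\<lambda>j. \<lfloor>v j / h\<rfloor>) {..<d}"
  define z where "z = (\<lambda>j. h * real_of_int (m j))"
  have zj: "0 \<le> v j - z j \<and> v j - z j < h" if "j < d" for j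
  proof -
    have a: "real_of_int \<lfloor>v j / h\<rfloor> \<le> v j / h" "v j / h < real_of_int \<lfloor>v j / h\<rfloor> + 1" by linarith+
    have "real_of_int \<lfloor>v j / h\<rfloor> * h \<le> v j" by (metis a(1) h pos_le_divide_eq)
    moreover have "v j < (real_of_int \<lfloor>v j / h\<rfloor> + 1) * h" by (metis a(2) h pos_divide_less_eq)
    ultimately have "h * real_of_int \<lfloor>v j / h\<rfloor> \<le> v j" "v j < h * real_of_int \<lfloor>v j / h\<rfloor> + h"
      by (simp_all add: algebra_simps)
    then show ?thesis using that by (simp add: z_def m_def)
  qed
  have "(nv d (\<lambda>i. v i - z i))\<^sup>2 \<le> (\<Sum>j<d. h\<^sup>2)"
  proof (unfold nv_sq, rule sum_mono)
    fix j assume "j \<in> {..<d}"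
    then have "0 \<le> v j - z j" "v j - z j \<le> h" using zj[of j] by auto
    then show "(v j - z j)\<^sup>2 \<le> h\<^sup>2" by (intro power_mono) auto
  qed
  also have "\<dots> = 1/64" using hsq by simp
  finally have n1sq: "(nv d (\<lambda>i. v i - z i))\<^sup>2 \<le> (1/8)\<^sup>2" by (simp add: power2_eq_square)
  have n1: "nv d (\<lambda>i. v i - z i) \<le> 1/8"
    by (rule power2_le_imp_le[OF n1sq]) simp
  have "nv d z = L2_set (\<lambda>i. v i + (- (v i - z i))) {..<d}" by (simp add: nv_def)
  also have "\<dots> \<le> nv d v + nv d (\<lambda>i. - (v i - z i))" unfolding nv_def by (rule L2_set_triangle_ineq)
  also have "\<dots> \<le> 9/8" using n1 v nv_neg[of d "\<lambda>i. v i - z i"] by simp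
  finally have n2: "nv d z \<le> 9/8" .
  have l1: "(\<Sum>j<d. \<bar>v j\<bar>) \<le> sqrt (real d)"
  proof -
    have "(\<Sum>j<d. \<bar>v j\<bar> * \<bar>1::real\<bar>) \<le> L2_set v {..<d} * L2_set (\<lambda>_. 1) {..<d}" by (rule L2_set_mult_ineq)
    then show ?thesis using v by (simp add: nv_def L2_set_constant)
  qed
  have mb: "\<bar>real_of_int (m j)\<bar> \<le> \<bar>v j\<bar> / h + 1" if "j < d" for j
  proof -
    have e: "m j = \<lfloor>v j / h\<rfloor>" using that by (simp add: m_def)
    have a: "\<bar>v j / h\<bar> = \<bar>v j\<bar> / h" using h by simp
    show ?thesis unfolding e using floor_abs_le[of "v j / h"] a by linarith
  qed
  have "(\<Sum>j<d. \<bar>real_of_int (m j)\<bar>) \<le> (\<Sum>j<d. \<bar>v j\<bar> / h + 1)"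
    by (rule sum_mono) (simp add: mb)
  also have "\<dots> = (\<Sum>j<d. \<bar>v j\<bar>) / h + real d" by (simp add: sum.distrib sum_divide_distrib)
  also have "\<dots> \<le> sqrt (real d) / h + real d" using l1 h by (simp add: divide_right_mono)
  also have "sqrt (real d) / h = 8 * real d"
  proof -
    have "sqrt (real d) / h = 8 * (sqrt (real d) * sqrt (real d))" by (simp add: h_def gridh_def)
    then show ?thesis by simp
  qed
  finally have sm: "(\<Sum>j<d. \<bar>real_of_int (m j)\<bar>) \<le> 9 * real d" by simp
  then have smi: "(\<Sum>j<d. \<bar>m j\<bar>) \<le> 9 * int d"
  proof -
    have "real_of_int (\<Sum>j<d. \<bar>m j\<bar>) = (\<Sum>j<d. \<bar>real_of_int (m j)\<bar>)" by simp
    also have "\<dots> \<le> real_of_int (9 * int d)" using sm by simp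
    finally show ?thesis by (simp only: of_int_le_iff)
  qed
  have mj: "\<bar>m j\<bar> \<le> 9 * int d" if "j < d" for j
  proof -
    have "\<bar>m j\<bar> \<le> (\<Sum>j<d. \<bar>m j\<bar>)"
      by (rule member_le_sum) (use that in auto)
    then show ?thesis using smi by linarith
  qed
  have "m \<in> PiE {..<d} (\<lambda>_. {-(9 * int d)..9 * int d})"
  proof (rule PiE_I)
    fix j assume j: "j \<in> {..<d}"
    then show "m j \<in> {-(9 * int d)..9 * int d}" using mj[of j] by (simp add: abs_le_iff)
  next
    fix j assume "j \<notin> {..<d}" then show "m j = undefined" by (simp add: m_def)
  qed
  then have "m \<in> MS d" unfolding MS_def using smi by simp
  then have "z \<in> net d" unfolding net_def z_def h_def by auto
  then show ?thesis using n1 n2 by blast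
qed

abbreviation N0 :: "real measure" where "N0 \<equiv> density lborel std_normal_density"

lemma meas_N0: "measurable M N0 = measurable M borel"
  by (rule measurable_cong_sets) simp_all

lemma gs_prob: "prob_space (gauss_samples n d)"
  unfolding gauss_samples_def by (intro prob_space_PiM prob_space_normal_density) simp

lemma space_gs: "space (gauss_samples n d) = PiE ({..<n} \<times> {..<d}) (\<lambda>_. UNIV)"
  unfolding gauss_samples_def by (simp add: space_PiM)

lemma coord_meas: "i \<in> {..<n} \<times> {..<d} \<Longrightarrow> (\<lambda>\<omega>. \<omega> i) \<in> borel_measurable (gauss_samples n d)"
proof -
  assume i: "i \<in> {..<n} \<times> {..<d}"
  have "(\<lambda>\<omega>. \<omega> i) \<in> measurable (gauss_samples n d) N0"
    unfolding gauss_samples_def by (rule measurable_component_singleton[OF i])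
  then show ?thesis by (simp only: meas_N0)
qed

lemma coord_distr: "i \<in> {..<n} \<times> {..<d} \<Longrightarrow> distr (gauss_samples n d) borel (\<lambda>\<omega>. \<omega> i) = N0"
proof -
  assume i: "i \<in> {..<n} \<times> {..<d}"
  have "distr (gauss_samples n d) borel (\<lambda>\<omega>. \<omega> i) = distr (gauss_samples n d) N0 (\<lambda>\<omega>. \<omega> i)"
    by (rule distr_cong) auto
  also have "\<dots> = N0" unfolding gauss_samples_def
    by (rule distr_PiM_component) (auto intro: prob_space_normal_density i)
  finally show ?thesis .
qed

lemma coord_distributed: "i \<in> {..<n} \<times> {..<d} \<Longrightarrow>
   distributed (gauss_samples n d) lborel (\<lambda>\<omega>. \<omega> i) (\<lambda>x. ennreal (normal_density 0 1 x))"
proof -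
  assume i: "i \<in> {..<n} \<times> {..<d}"
  have "distr (gauss_samples n d) lborel (\<lambda>\<omega>. \<omega> i) = distr (gauss_samples n d) borel (\<lambda>\<omega>. \<omega> i)"
    by (rule distr_cong) auto
  moreover have "measurable (gauss_samples n d) lborel = measurable (gauss_samples n d) borel"
    by (rule measurable_cong_sets) simp_all
  ultimately show ?thesis unfolding distributed_def using coord_distr[OF i] coord_meas[OF i]
    by simp
qed

lemma coord_indep:
  assumes "0 < n" "0 < d"
  shows "prob_space.indep_vars (gauss_samples n d) (\<lambda>_. borel) (\<lambda>i \<omega>. \<omega> i) ({..<n} \<times> {..<d})"
proof -
  interpret prob_space "gauss_samples n d" by (rule gs_prob)
  let ?I = "{..<n} \<times> {..<d}"
  have ne: "?I \<noteq> {}" using assms by auto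
  have rv: "\<And>i. i \<in> ?I \<Longrightarrow> random_variable borel (\<lambda>\<omega>. \<omega> i)" by (rule coord_meas)
  have "distr (gauss_samples n d) (\<Pi>\<^sub>M i\<in>?I. borel) (\<lambda>x. \<lambda>i\<in>?I. x i)
      = distr (gauss_samples n d) (gauss_samples n d) (\<lambda>x. x)"
  proof (rule distr_cong)
    show "sets (\<Pi>\<^sub>M i\<in>?I. borel) = sets (gauss_samples n d)"
      unfolding gauss_samples_def by (rule sets_PiM_cong) auto
    fix x assume "x \<in> space (gauss_samples n d)"
    then show "(\<lambda>i\<in>?I. x i) = x" unfolding space_gs by (auto simp: PiE_def extensional_def)
  qed simp
  also have "\<dots> = gauss_samples n d" by simp
  also have "\<dots> = (\<Pi>\<^sub>M i\<in>?I. distr (gauss_samples n d) borel (\<lambda>\<omega>. \<omega> i))"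
    unfolding gauss_samples_def
    by (rule PiM_cong) (simp_all add: coord_distr[unfolded gauss_samples_def])
  finally have eq: "distr (gauss_samples n d) (\<Pi>\<^sub>M i\<in>?I. borel) (\<lambda>x. \<lambda>i\<in>?I. x i) = (\<Pi>\<^sub>M i\<in>?I. distr (gauss_samples n d) borel (\<lambda>\<omega>. \<omega> i))" .
  have iff: "indep_vars (\<lambda>_. borel) (\<lambda>i \<omega>. \<omega> i) ?I \<longleftrightarrow> distr (gauss_samples n d) (\<Pi>\<^sub>M i\<in>?I. borel) (\<lambda>x. \<lambda>i\<in>?I. x i) = (\<Pi>\<^sub>M i\<in>?I. distr (gauss_samples n d) borel (\<lambda>\<omega>. \<omega> i))"
    using indep_vars_iff_distr_eq_PiM'[where I="?I" and M'="\<lambda>_. borel" and X="\<lambda>i \<omega>. \<omega> i", OF ne rv] by simp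
  show ?thesis by (rule iffD2[OF iff eq])
qed

lemma nd_times_exp:
  assumes s: "0 < \<sigma>" and c: "0 < 1 - 2 * b * \<sigma>\<^sup>2"
  shows "normal_density 0 \<sigma> x * exp (b * x\<^sup>2)
       = (1 / sqrt (1 - 2 * b * \<sigma>\<^sup>2)) * normal_density 0 (\<sigma> / sqrt (1 - 2 * b * \<sigma>\<^sup>2)) x"
proof -
  define c where "c = 1 - 2 * b * \<sigma>\<^sup>2"
  have c0: "0 < c" using c by (simp add: c_def)
  have sc: "0 < sqrt c" using c0 by simp
  have tau2: "(\<sigma> / sqrt c)\<^sup>2 = \<sigma>\<^sup>2 / c" using c0 by (simp add: power_divide)
  have sq: "sqrt (2 * pi * (\<sigma>\<^sup>2 / c)) = sqrt (2 * pi * \<sigma>\<^sup>2) / sqrt c"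
    by (simp add: real_sqrt_divide[symmetric])
  have ex: "- x\<^sup>2 / (2 * (\<sigma>\<^sup>2 / c)) = - x\<^sup>2 / (2 * \<sigma>\<^sup>2) + b * x\<^sup>2"
    using s c0 unfolding c_def by (simp add: field_simps)
  have "normal_density 0 \<sigma> x * exp (b * x\<^sup>2) = 1 / sqrt (2 * pi * \<sigma>\<^sup>2) * exp (- x\<^sup>2 / (2 * \<sigma>\<^sup>2) + b * x\<^sup>2)"
    unfolding normal_density_def by (simp add: mult_exp_exp algebra_simps)
  also have "\<dots> = (1 / sqrt c) * (1 / sqrt (2 * pi * (\<sigma>\<^sup>2 / c)) * exp (- x\<^sup>2 / (2 * (\<sigma>\<^sup>2 / c))))"
    unfolding sq ex using sc by simp
  also have "\<dots> = (1 / sqrt c) * normal_density 0 (\<sigma> / sqrt c) x"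
    unfolding normal_density_def tau2 by simp
  finally show ?thesis unfolding c_def .
qed

lemma gauss_sq_integral:
  assumes s: "0 < \<sigma>" and c: "0 < 1 - 2 * b * \<sigma>\<^sup>2"
  shows "has_bochner_integral lborel (\<lambda>x. normal_density 0 \<sigma> x * exp (b * x\<^sup>2)) (1 / sqrt (1 - 2 * b * \<sigma>\<^sup>2))"
proof -
  have tau: "0 < \<sigma> / sqrt (1 - 2 * b * \<sigma>\<^sup>2)" using s c by simp
  have "has_bochner_integral lborel (normal_density 0 (\<sigma> / sqrt (1 - 2 * b * \<sigma>\<^sup>2))) 1"
    using has_bochner_integral_integrable[OF integrable_normal_density] tau by simp
  then have "has_bochner_integral lborel (\<lambda>x. (1 / sqrt (1 - 2 * b * \<sigma>\<^sup>2)) * normal_density 0 (\<sigma> / sqrt (1 - 2 * b * \<sigma>\<^sup>2)) x) (1 / sqrt (1 - 2 * b * \<sigma>\<^sup>2) * 1)"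
    by (rule has_bochner_integral_mult_right)
  then show ?thesis by (simp add: nd_times_exp[OF s c])
qed

lemma mgf_bound:
  fixes t :: real
  assumes "\<bar>t\<bar> \<le> 1/4"
  shows "exp (- t) / sqrt (1 - 2 * t) \<le> exp (4 * t\<^sup>2)"
proof -
  have lnb: "- 2 * t - 8 * t\<^sup>2 \<le> ln (1 - 2 * t)"
  proof (cases "0 \<le> t")
    case True
    have "- (2 * t) - 2 * (2 * t)\<^sup>2 \<le> ln (1 - 2 * t)"
      by (rule ln_one_minus_pos_lower_bound) (use True assms in auto)
    then show ?thesis by (simp add: power2_eq_square)
  next
    case False
    have "(- 2 * t) - (- 2 * t)\<^sup>2 \<le> ln (1 + (- 2 * t))"
      by (rule ln_one_plus_pos_lower_bound) (use False assms in auto)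
    then have h: "- (2 * t) - 4 * (t * t) \<le> ln (1 - 2 * t)" by (simp add: power2_eq_square)
    have "0 \<le> t * t" by simp
    then show ?thesis using h unfolding power2_eq_square by linarith
  qed
  have c0: "0 < 1 - 2 * t" using assms by auto
  have "exp (- 2 * t - 8 * t\<^sup>2) \<le> 1 - 2 * t"
    using lnb c0 by (metis exp_le_cancel_iff exp_ln)
  then have "(exp (- t - 4 * t\<^sup>2))\<^sup>2 \<le> 1 - 2 * t"
    by (simp add: power2_eq_square exp_add[symmetric])
  then have sq: "exp (- t - 4 * t\<^sup>2) \<le> sqrt (1 - 2 * t)"
    using real_le_rsqrt by blast
  have "exp (- t) / sqrt (1 - 2 * t) \<le> exp (- t) / exp (- t - 4 * t\<^sup>2)"
    by (rule divide_left_mono[OF sq]) (use c0 in auto)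
  also have "\<dots> = exp (4 * t\<^sup>2)" by (simp add: exp_diff[symmetric])
  finally show ?thesis .
qed

definition qf :: "nat \<Rightarrow> nat \<Rightarrow> (nat \<Rightarrow> real) \<Rightarrow> (nat \<times> nat \<Rightarrow> real) \<Rightarrow> real" where
  "qf n d z \<omega> = (1 / real n) * (\<Sum>s<n. (\<Sum>j<d. z j * \<omega> (s, j))\<^sup>2 - (\<Sum>j<d. (z j)\<^sup>2))"

lemma g_distributed:
  assumes n: "0 < n" and d: "0 < d" and s: "s < n" and r: "0 < (\<Sum>j<d. (z j)\<^sup>2)"
  shows "distributed (gauss_samples n d) lborel (\<lambda>\<omega>. \<Sum>j<d. z j * \<omega> (s, j))
           (\<lambda>x. ennreal (normal_density 0 (sqrt (\<Sum>j<d. (z j)\<^sup>2)) x))"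
proof -
  interpret prob_space "gauss_samples n d" by (rule gs_prob)
  define J where "J = {j \<in> {..<d}. z j \<noteq> 0}"
  have fJ: "finite J" unfolding J_def by simp
  have JnE: "J \<noteq> {}"
  proof
    assume "J = {}"
    then have "\<forall>j<d. z j = 0" unfolding J_def by auto
    then show False using r by simp
  qed
  have ind0: "indep_vars (\<lambda>j. PiM {(s, j)} (\<lambda>_. borel)) (\<lambda>j \<omega>. restrict (\<lambda>i. \<omega> i) {(s, j)}) J"
    by (rule indep_vars_restrict[OF coord_indep[OF n d]]) (auto simp: J_def s disjoint_family_on_def)
  have ind1: "indep_vars (\<lambda>_. borel) (\<lambda>j \<omega>. (\<lambda>f. z j * f (s, j)) (restrict (\<lambda>i. \<omega> i) {(s, j)})) J"
    by (rule indep_vars_compose2[OF ind0]) measurable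
  have ind: "indep_vars (\<lambda>_. borel) (\<lambda>j \<omega>. z j * \<omega> (s, j)) J"
    using ind1 by simp
  have dj: "distributed (gauss_samples n d) lborel (\<lambda>\<omega>. z j * \<omega> (s, j)) (\<lambda>x. ennreal (normal_density 0 \<bar>z j\<bar> x))"
    if "j \<in> J" for j
  proof -
    have jj: "(s, j) \<in> {..<n} \<times> {..<d}" using that s by (auto simp: J_def)
    have zj: "z j \<noteq> 0" using that by (auto simp: J_def)
    have "distributed (gauss_samples n d) lborel (\<lambda>\<omega>. 0 + z j * \<omega> (s, j)) (\<lambda>x. ennreal (normal_density (0 + z j * 0) (\<bar>z j\<bar> * 1) x))"
      by (rule normal_density_affine[OF coord_distributed[OF jj]]) (use zj in auto)
    then show ?thesis by simp
  qed
  have "distributed (gauss_samples n d) lborel (\<lambda>\<omega>. \<Sum>j\<in>J. z j * \<omega> (s, j))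
     (\<lambda>x. ennreal (normal_density (\<Sum>j\<in>J. 0) (sqrt (\<Sum>j\<in>J. \<bar>z j\<bar>\<^sup>2)) x))"
    by (rule sum_indep_normal[OF fJ JnE ind]) (use dj in \<open>auto simp: J_def\<close>)
  moreover have "(\<lambda>\<omega>. \<Sum>j\<in>J. z j * \<omega> (s, j)) = (\<lambda>\<omega>. \<Sum>j<d. z j * \<omega> (s, j))"
    by (rule ext, rule sum.mono_neutral_left) (auto simp: J_def)
  moreover have "(\<Sum>j\<in>J. \<bar>z j\<bar>\<^sup>2) = (\<Sum>j<d. (z j)\<^sup>2)"
    by (simp, rule sum.mono_neutral_left) (auto simp: J_def)
  ultimately show ?thesis by simp
qed

lemma Y_indep:
  assumes n: "0 < n" and d: "0 < d"
  shows "prob_space.indep_vars (gauss_samples n d) (\<lambda>_. borel)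
     (\<lambda>s \<omega>. exp (b * ((\<Sum>j<d. z j * \<omega> (s, j))\<^sup>2 - r))) {..<n}"
proof -
  interpret prob_space "gauss_samples n d" by (rule gs_prob)
  have ind0: "indep_vars (\<lambda>s. PiM ({s} \<times> {..<d}) (\<lambda>_. borel)) (\<lambda>s \<omega>. restrict (\<lambda>i. \<omega> i) ({s} \<times> {..<d})) {..<n}"
    by (rule indep_vars_restrict[OF coord_indep[OF n d]]) (auto simp: disjoint_family_on_def)
  have ind1: "indep_vars (\<lambda>_. borel) (\<lambda>s \<omega>. (\<lambda>f. exp (b * ((\<Sum>j<d. z j * f (s, j))\<^sup>2 - r))) (restrict (\<lambda>i. \<omega> i) ({s} \<times> {..<d}))) {..<n}"
    by (rule indep_vars_compose2[OF ind0]) measurable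
  have eq: "(\<lambda>s \<omega>. (\<lambda>f. exp (b * ((\<Sum>j<d. z j * f (s, j))\<^sup>2 - r))) (restrict (\<lambda>i. \<omega> i) ({s} \<times> {..<d})))
      = (\<lambda>s \<omega>. exp (b * ((\<Sum>j<d. z j * \<omega> (s, j))\<^sup>2 - r)))"
  proof -
    have "(\<Sum>j<d. z j * restrict (\<lambda>i. \<omega> i) ({s} \<times> {..<d}) (s, j)) = (\<Sum>j<d. z j * \<omega> (s, j))" for s \<omega>
      by (rule sum.cong) auto
    then show ?thesis by simp
  qed
  show ?thesis using ind1 unfolding eq .
qed

lemma Y_integral:
  assumes n: "0 < n" and d: "0 < d" and s: "s < n" and r: "0 < r" and rdef: "r = (\<Sum>j<d. (z j)\<^sup>2)"
    and b: "\<bar>b * r\<bar> \<le> 1/4"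
  shows "integrable (gauss_samples n d) (\<lambda>\<omega>. exp (b * ((\<Sum>j<d. z j * \<omega> (s, j))\<^sup>2 - r)))
    \<and> (\<integral>\<omega>. exp (b * ((\<Sum>j<d. z j * \<omega> (s, j))\<^sup>2 - r)) \<partial>gauss_samples n d) = exp (- (b * r)) / sqrt (1 - 2 * (b * r))"
proof -
  have D: "distributed (gauss_samples n d) lborel (\<lambda>\<omega>. \<Sum>j<d. z j * \<omega> (s, j))
           (\<lambda>x. ennreal (normal_density 0 (sqrt r) x))"
    using g_distributed[OF n d s] r unfolding rdef by simp
  have sr: "0 < sqrt r" using r by simp
  have sr2: "(sqrt r)\<^sup>2 = r" using r by simp
  have c: "0 < 1 - 2 * b * (sqrt r)\<^sup>2" using b unfolding sr2 by (auto simp: abs_le_iff)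
  have H: "has_bochner_integral lborel (\<lambda>x. normal_density 0 (sqrt r) x * exp (b * x\<^sup>2)) (1 / sqrt (1 - 2 * b * r))"
    using gauss_sq_integral[OF sr c] unfolding sr2 .
  have H2: "has_bochner_integral lborel (\<lambda>x. normal_density 0 (sqrt r) x * exp (b * (x\<^sup>2 - r)))
            (exp (- (b * r)) * (1 / sqrt (1 - 2 * b * r)))"
  proof -
    have "has_bochner_integral lborel (\<lambda>x. exp (- (b * r)) * (normal_density 0 (sqrt r) x * exp (b * x\<^sup>2)))
            (exp (- (b * r)) * (1 / sqrt (1 - 2 * b * r)))"
      by (rule has_bochner_integral_mult_right[OF H])
    moreover have "(\<lambda>x. exp (- (b * r)) * (normal_density 0 (sqrt r) x * exp (b * x\<^sup>2)))
        = (\<lambda>x. normal_density 0 (sqrt r) x * exp (b * (x\<^sup>2 - r)))"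
      by (auto simp: right_diff_distrib exp_diff exp_minus field_simps)
    ultimately show ?thesis by simp
  qed
  have meas: "(\<lambda>x. exp (b * (x\<^sup>2 - r))) \<in> borel_measurable lborel" by measurable
  have int: "integrable (gauss_samples n d) (\<lambda>\<omega>. exp (b * ((\<Sum>j<d. z j * \<omega> (s, j))\<^sup>2 - r)))"
    using distributed_integrable[OF D meas] H2 by (auto simp: has_bochner_integral_iff)
  have "(\<integral>\<omega>. exp (b * ((\<Sum>j<d. z j * \<omega> (s, j))\<^sup>2 - r)) \<partial>gauss_samples n d)
      = (\<integral>x. normal_density 0 (sqrt r) x * exp (b * (x\<^sup>2 - r)) \<partial>lborel)"
    using distributed_integral[OF D meas] by simp
  also have "\<dots> = exp (- (b * r)) / sqrt (1 - 2 * (b * r))"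
    using H2 by (simp add: has_bochner_integral_iff mult.assoc)
  finally show ?thesis using int by simp
qed

lemma mgf_q:
  assumes n: "0 < n" and d: "0 < d" and rdef: "r = (\<Sum>j<d. (z j)\<^sup>2)"
    and mu: "\<bar>\<mu>\<bar> * r \<le> real n / 4"
  shows "integrable (gauss_samples n d) (\<lambda>\<omega>. exp (\<mu> * qf n d z \<omega>))
    \<and> (\<integral>\<omega>. exp (\<mu> * qf n d z \<omega>) \<partial>gauss_samples n d) \<le> exp (4 * \<mu>\<^sup>2 * r\<^sup>2 / real n)"
proof -
  interpret prob_space "gauss_samples n d" by (rule gs_prob)
  have r0: "0 \<le> r" unfolding rdef by (simp add: sum_nonneg)
  show ?thesis
  proof (cases "r = 0")
    case True
    then have "\<forall>j<d. z j = 0" unfolding rdef by (simp add: sum_nonneg_eq_0_iff)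
    then have "qf n d z \<omega> = 0" for \<omega> unfolding qf_def by simp
    then show ?thesis by (simp add: prob_space)
  next
    case False
    then have r: "0 < r" using r0 by simp
    define b where "b = \<mu> / real n"
    have br: "\<bar>b * r\<bar> \<le> 1/4"
      using mu n r unfolding b_def by (simp add: abs_mult field_simps)
    define Y where "Y = (\<lambda>(s::nat) (\<omega>::nat \<times> nat \<Rightarrow> real). exp (b * ((\<Sum>j<d. z j * \<omega> (s, j))\<^sup>2 - r)))"
    have prodeq: "exp (\<mu> * qf n d z \<omega>) = (\<Prod>s<n. Y s \<omega>)" for \<omega>
    proof -
      have "\<mu> * qf n d z \<omega> = (\<Sum>s<n. b * ((\<Sum>j<d. z j * \<omega> (s, j))\<^sup>2 - r))"
        unfolding qf_def b_def rdef[symmetric] by (simp add: sum_distrib_left)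
      then show ?thesis unfolding Y_def by (simp add: exp_sum)
    qed
    have ind: "indep_vars (\<lambda>_. borel) Y {..<n}" unfolding Y_def by (rule Y_indep[OF n d])
    have YI: "integrable (gauss_samples n d) (Y s) \<and> (\<integral>\<omega>. Y s \<omega> \<partial>gauss_samples n d) = exp (- (b * r)) / sqrt (1 - 2 * (b * r))"
      if "s \<in> {..<n}" for s
      using Y_integral[OF n d _ r rdef br, of s] that unfolding Y_def by simp
    have int: "integrable (gauss_samples n d) (\<lambda>\<omega>. \<Prod>s<n. Y s \<omega>)"
      by (rule indep_vars_integrable[OF _ ind]) (use YI in auto)
    have "(\<integral>\<omega>. (\<Prod>s<n. Y s \<omega>) \<partial>gauss_samples n d) = (\<Prod>s<n. \<integral>\<omega>. Y s \<omega> \<partial>gauss_samples n d)"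
      by (rule indep_vars_lebesgue_integral[OF _ ind]) (use YI in auto)
    also have "\<dots> = (exp (- (b * r)) / sqrt (1 - 2 * (b * r))) ^ n" using YI by simp
    also have "\<dots> \<le> (exp (4 * (b * r)\<^sup>2)) ^ n"
    proof (rule power_mono[OF mgf_bound[OF br]])
      have "0 < 1 - 2 * (b * r)" using br by (auto simp: abs_le_iff)
      then show "0 \<le> exp (- (b * r)) / sqrt (1 - 2 * (b * r))" by simp
    qed
    also have "\<dots> = exp (4 * \<mu>\<^sup>2 * r\<^sup>2 / real n)"
    proof -
      have "real n * (4 * (b * r)\<^sup>2) = 4 * \<mu>\<^sup>2 * r\<^sup>2 / real n"
        unfolding b_def using n by (simp add: power2_eq_square field_simps)
      then show ?thesis by (simp add: exp_of_nat_mult[symmetric])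
    qed
    finally show ?thesis using int unfolding prodeq by simp
  qed
qed

definition mmeas :: "nat \<Rightarrow> 'a measure \<Rightarrow> ('a \<Rightarrow> nat \<Rightarrow> nat \<Rightarrow> real) \<Rightarrow> bool" where
  "mmeas d M F \<longleftrightarrow> (\<forall>p<d. \<forall>q<d. (\<lambda>\<omega>. F \<omega> p q) \<in> borel_measurable M)"

lemma mmeas_const: "mmeas d M (\<lambda>\<omega>. C)" by (simp add: mmeas_def)

lemma mmeas_mult: "mmeas d M F \<Longrightarrow> mmeas d M G \<Longrightarrow> mmeas d M (\<lambda>\<omega>. mat_mult d (F \<omega>) (G \<omega>))"
  unfolding mmeas_def mat_mult_def by (auto intro!: borel_measurable_sum borel_measurable_times)

lemma mmeas_sub: "mmeas d M F \<Longrightarrow> mmeas d M G \<Longrightarrow> mmeas d M (\<lambda>\<omega>. mat_sub (F \<omega>) (G \<omega>))"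
  unfolding mmeas_def mat_sub_def by (auto intro!: borel_measurable_diff)

lemma mmeas_pow: "mmeas d M F \<Longrightarrow> mmeas d M (\<lambda>\<omega>. mat_pow d (F \<omega>) k)"
proof (induction k)
  case 0 then show ?case by (simp add: mmeas_const)
next
  case (Suc k) then show ?case by (simp add: mmeas_mult)
qed

lemma mmeas_S: "mmeas d (gauss_samples n d) (\<lambda>\<omega>. emp_cov n d \<omega>)"
  unfolding mmeas_def emp_cov_def
proof (intro allI impI)
  fix p q assume "p < d" "q < d"
  then show "(\<lambda>\<omega>. 1 / real n * (\<Sum>k<n. \<omega> (k, p) * \<omega> (k, q))) \<in> borel_measurable (gauss_samples n d)"
    by (intro borel_measurable_times borel_measurable_const borel_measurable_sum) (auto intro!: coord_meas)
qed

definition ev :: "nat \<Rightarrow> nat \<Rightarrow> real" where "ev p = (\<lambda>j. if j = p then 1 else 0)"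

lemma nv_ev: "p < d \<Longrightarrow> nv d (ev p) = 1"
proof -
  assume "p < d"
  then have "(\<Sum>j<d. (ev p j)\<^sup>2) = (\<Sum>j\<in>{p}. (ev p j)\<^sup>2)"
    by (intro sum.mono_neutral_right) (auto simp: ev_def)
  then show ?thesis by (simp add: nv_def L2_set_def ev_def)
qed

lemma bil_ev: "p < d \<Longrightarrow> q < d \<Longrightarrow> bil d (ev p) M (ev q) = M p q"
  unfolding bil_expand ev_def
  by (simp add: if_distrib[where f = "\<lambda>x. x * _"] if_distrib[where f = "\<lambda>x. _ * x"] cong: if_cong)

lemma entry_le: "p < d \<Longrightarrow> q < d \<Longrightarrow> \<bar>M p q\<bar> \<le> op_norm d M"
proof -
  assume pq: "p < d" "q < d"
  then have d: "0 < d" by simp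
  have "\<bar>bil d (ev p) M (ev q)\<bar> \<le> nv d (ev p) * op_norm d M * nv d (ev q)" by (rule abs_bil_le[OF d])
  then show ?thesis using pq by (simp add: bil_ev nv_ev)
qed

lemma opn_le_bil:
  assumes d: "0 < d" and K: "0 \<le> K"
    and h: "\<And>v w. nv d v = 1 \<Longrightarrow> nv d w = 1 \<Longrightarrow> \<bar>bil d w M v\<bar> \<le> K"
  shows "op_norm d M \<le> K"
proof (rule opn_le[OF d])
  fix v assume v: "nv d v = 1"
  define u where "u = mv d M v"
  define t where "t = nv d u"
  show "nv d (mv d M v) \<le> K"
  proof (cases "t = 0")
    case True then show ?thesis using K by (simp add: t_def u_def)
  next
    case False
    then have t: "0 < t" using nv_nonneg[of d u] unfolding t_def by linarith
    define w where "w = (\<lambda>i. (1/t) * u i)"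
    have "bil d w M v = (\<Sum>i<d. (1/t) * (u i)\<^sup>2)"
      unfolding bil_def w_def u_def by (simp add: power2_eq_square)
    also have "\<dots> = (1/t) * t\<^sup>2" by (simp add: sum_divide_distrib[symmetric] t_def nv_sq)
    also have "\<dots> = t" using t by (simp add: power2_eq_square)
    finally have bw: "bil d w M v = t" .
    have nw: "nv d w = 1" unfolding w_def using t by (subst nv_scale) (auto simp: t_def)
    show ?thesis using h[OF v nw] bw by (simp add: t_def u_def)
  qed
qed

lemma sym_E: "sym_mat d (mat_sub (emp_cov n d \<omega>) mat_id)"
  unfolding sym_mat_def mat_sub_def emp_cov_def mat_id_def by (auto simp: mult.commute)

lemma bil_qf:
  assumes n: "0 < n"
  shows "bil d z (mat_sub (emp_cov n d \<omega>) mat_id) z = qf n d z \<omega>"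
proof -
  have a: "bil d z (mat_sub (emp_cov n d \<omega>) mat_id) z = bil d z (emp_cov n d \<omega>) z - bil d z mat_id z"
    unfolding bil_expand mat_sub_def by (simp add: algebra_simps sum_subtractf)
  have b: "bil d z mat_id z = (\<Sum>j<d. (z j)\<^sup>2)"
    unfolding bil_expand mat_id_def
    by (simp add: if_distrib[where f = "\<lambda>x. _ * x * _"] power2_eq_square cong: if_cong)
  have c: "bil d z (emp_cov n d \<omega>) z = (1 / real n) * (\<Sum>s<n. (\<Sum>j<d. z j * \<omega> (s, j))\<^sup>2)"
  proof -
    have t: "z i * emp_cov n d \<omega> i j * z j = (\<Sum>s<n. (1 / real n) * ((z i * \<omega> (s, i)) * (z j * \<omega> (s, j))))" for i j
      by (simp add: emp_cov_def sum_distrib_left sum_distrib_right ac_simps)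
    have "bil d z (emp_cov n d \<omega>) z = (\<Sum>i<d. \<Sum>j<d. \<Sum>s<n. (1 / real n) * ((z i * \<omega> (s, i)) * (z j * \<omega> (s, j))))"
      unfolding bil_expand t ..
    also have "\<dots> = (\<Sum>s<n. \<Sum>i<d. \<Sum>j<d. (1 / real n) * ((z i * \<omega> (s, i)) * (z j * \<omega> (s, j))))"
    proof -
      have "(\<Sum>i<d. \<Sum>j<d. \<Sum>s<n. (1 / real n) * ((z i * \<omega> (s, i)) * (z j * \<omega> (s, j))))
          = (\<Sum>i<d. \<Sum>s<n. \<Sum>j<d. (1 / real n) * ((z i * \<omega> (s, i)) * (z j * \<omega> (s, j))))"
        by (rule sum.cong[OF refl], rule sum.swap)
      also have "\<dots> = (\<Sum>s<n. \<Sum>i<d. \<Sum>j<d. (1 / real n) * ((z i * \<omega> (s, i)) * (z j * \<omega> (s, j))))"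
        by (rule sum.swap)
      finally show ?thesis .
    qed
    also have "\<dots> = (\<Sum>s<n. (1 / real n) * ((\<Sum>i<d. z i * \<omega> (s, i)) * (\<Sum>j<d. z j * \<omega> (s, j))))"
      unfolding sum_product by (simp only: sum_distrib_left)
    also have "\<dots> = (1 / real n) * (\<Sum>s<n. (\<Sum>j<d. z j * \<omega> (s, j))\<^sup>2)"
      by (simp only: sum_distrib_left power2_eq_square)
    finally show ?thesis .
  qed
  have "qf n d z \<omega> = (1 / real n) * (\<Sum>s<n. (\<Sum>j<d. z j * \<omega> (s, j))\<^sup>2) - (\<Sum>j<d. (z j)\<^sup>2)"
    unfolding qf_def using n by (simp add: sum_subtractf right_diff_distrib)
  then show ?thesis using a b c by simp
qed

lemma RB_eqd: "eqd d (mat_sub (mat_sub mat_id (mat_mult d S A)) (mat_sub mat_id A))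
                    (mat_neg (mat_mult d (mat_sub S mat_id) A))"
proof -
  have "mat_mult d mat_id A p q = A p q" if "p < d" "q < d" for p q
    using mult_id_left[of d A] that by (simp add: eqd_def)
  then show ?thesis
    unfolding eqd_def mat_sub_def mat_neg_def
    by (auto simp: mat_mult_def sum_subtractf left_diff_distrib)
qed

lemma det_bound:
  assumes d: "0 < d" and ij: "i + j = m"
  shows "op_norm d (mat_sub (mat_mult d (mat_mult d (mat_pow d (mat_sub mat_id (mat_mult d S A)) i) S)
                              (mat_pow d (mat_sub mat_id (mat_mult d S A)) j)) (mat_pow d (mat_sub mat_id A) m))
     \<le> (op_norm d (mat_sub mat_id A) + op_norm d (mat_sub S mat_id) * op_norm d A) ^ m
          * (1 + op_norm d (mat_sub S mat_id)) - op_norm d (mat_sub mat_id A) ^ m"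
proof -
  define B where "B = mat_sub mat_id A"
  define R where "R = mat_sub mat_id (mat_mult d S A)"
  define e where "e = op_norm d B"
  define X where "X = op_norm d (mat_sub S mat_id)"
  define a where "a = op_norm d A"
  have X0: "0 \<le> X" and a0: "0 \<le> a" using opn_nonneg[OF d] by (auto simp: X_def a_def)
  have h1: "op_norm d (mat_sub R B) \<le> (e + X * a) - e"
  proof -
    have "op_norm d (mat_sub R B) = op_norm d (mat_neg (mat_mult d (mat_sub S mat_id) A))"
      unfolding R_def B_def by (rule opn_cong[OF RB_eqd])
    also have "\<dots> \<le> op_norm d (mat_mult d (mat_sub S mat_id) A)" by (rule opn_neg[OF d])
    also have "\<dots> \<le> X * a" unfolding X_def a_def by (rule opn_mult[OF d])
    finally show ?thesis by simp
  qed
  have h2: "op_norm d B \<le> e" by (simp add: e_def)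
  have Pi: "op_norm d (mat_sub (mat_pow d R i) (mat_pow d B i)) \<le> (e + X * a) ^ i - e ^ i
       \<and> op_norm d (mat_pow d B i) \<le> e ^ i" by (rule pb_pow[OF d h1 h2])
  have Pj: "op_norm d (mat_sub (mat_pow d R j) (mat_pow d B j)) \<le> (e + X * a) ^ j - e ^ j
       \<and> op_norm d (mat_pow d B j) \<le> e ^ j" by (rule pb_pow[OF d h1 h2])
  have hS: "op_norm d (mat_sub S mat_id) \<le> (1 + X) - 1" by (simp add: X_def)
  have PS: "op_norm d (mat_sub (mat_mult d (mat_pow d R i) S) (mat_mult d (mat_pow d B i) mat_id)) \<le> (e + X * a) ^ i * (1 + X) - e ^ i * 1
      \<and> op_norm d (mat_mult d (mat_pow d B i) mat_id) \<le> e ^ i * 1"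
    by (rule pb_comp[OF d]) (use Pi hS opn_id[OF d] in auto)
  have PP: "op_norm d (mat_sub (mat_mult d (mat_mult d (mat_pow d R i) S) (mat_pow d R j))
              (mat_mult d (mat_mult d (mat_pow d B i) mat_id) (mat_pow d B j)))
       \<le> (e + X * a) ^ i * (1 + X) * (e + X * a) ^ j - e ^ i * 1 * e ^ j"
    using pb_comp[OF d _ _ Pj[THEN conjunct1] Pj[THEN conjunct2]] PS by blast
  have eq: "eqd d (mat_mult d (mat_mult d (mat_pow d B i) mat_id) (mat_pow d B j)) (mat_pow d B m)"
  proof -
    have "eqd d (mat_mult d (mat_mult d (mat_pow d B i) mat_id) (mat_pow d B j)) (mat_mult d (mat_pow d B i) (mat_pow d B j))"
      by (rule eqd_mult[OF mult_id_right eqd_refl])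
    then show ?thesis using eqd_trans[OF _ eqd_sym[OF pow_add[of d B i j]]] ij by blast
  qed
  have "op_norm d (mat_sub (mat_mult d (mat_mult d (mat_pow d R i) S) (mat_pow d R j)) (mat_pow d B m))
      = op_norm d (mat_sub (mat_mult d (mat_mult d (mat_pow d R i) S) (mat_pow d R j))
              (mat_mult d (mat_mult d (mat_pow d B i) mat_id) (mat_pow d B j)))"
    by (rule opn_cong[OF eqd_sub[OF eqd_refl eqd_sym[OF eq]]])
  also have "\<dots> \<le> (e + X * a) ^ m * (1 + X) - e ^ m"
    using PP unfolding ij[symmetric] power_add by (simp add: ac_simps)
  finally show ?thesis unfolding B_def R_def e_def X_def a_def by (simp add: mult.commute)
qed

definition net2 :: "nat \<Rightarrow> (nat \<Rightarrow> real) set" where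
  "net2 d = {z \<in> net d. nv d z \<le> 9/8}"

lemma finite_net2: "finite (net2 d)"
  unfolding net2_def using finite_net by simp

lemma card_net2: "real (card (net2 d)) \<le> exp (11 * real d)"
proof -
  have "card (net2 d) \<le> card (net d)" unfolding net2_def by (rule card_mono[OF finite_net]) auto
  then show ?thesis using card_net[of d] by linarith
qed

lemma net2_prop: "0 < d \<Longrightarrow> nv d v = 1 \<Longrightarrow> \<exists>z\<in>net2 d. nv d (\<lambda>i. v i - z i) \<le> 1/8 \<and> nv d z \<le> 9/8"
  using net_prop[of d v] unfolding net2_def by auto

lemma net2_ne: "0 < d \<Longrightarrow> net2 d \<noteq> {}"
  using net2_prop[of d e0] nv_e0[of d] by auto

lemma net2_r: "z \<in> net2 d \<Longrightarrow> (\<Sum>j<d. (z j)\<^sup>2) \<le> 2"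
proof -
  assume "z \<in> net2 d"
  then have "nv d z \<le> 9/8" unfolding net2_def by simp
  then have "(nv d z)\<^sup>2 \<le> (9/8)\<^sup>2" by (intro power_mono) auto
  moreover have "(9/8::real)\<^sup>2 \<le> 2" by (simp add: power2_eq_square)
  ultimately show ?thesis unfolding nv_sq by linarith
qed

lemma exp_abs_le: fixes c x :: real shows "exp (c * \<bar>x\<bar>) \<le> exp (c * x) + exp (- c * x)"
proof (cases "0 \<le> x")
  case True
  then have "exp (c * \<bar>x\<bar>) = exp (c * x)" by (simp add: abs_of_nonneg)
  moreover have "0 < exp (- c * x)" by simp
  ultimately show ?thesis by linarith
next
  case False
  then have "exp (c * \<bar>x\<bar>) = exp (- c * x)" by (simp add: abs_of_neg)
  moreover have "0 < exp (c * x)" by simp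
  ultimately show ?thesis by linarith
qed

lemma pointwise:
  fixes \<omega> :: "nat \<times> nat \<Rightarrow> real"
  assumes d: "0 < d" and n: "0 < n" and ij: "i + j = m"
    and e: "0 < op_norm d (mat_sub mat_id A)"
    and th: "\<theta> = real m * op_norm d A / op_norm d (mat_sub mat_id A) + 1"
    and la: "0 \<le> lam" and La: "Lam = \<theta> + lam"
  shows "op_norm d (mat_sub (mat_mult d (mat_mult d (mat_pow d (mat_sub mat_id (mat_mult d (emp_cov n d \<omega>) A)) i) (emp_cov n d \<omega>))
                              (mat_pow d (mat_sub mat_id (mat_mult d (emp_cov n d \<omega>) A)) j)) (mat_pow d (mat_sub mat_id A) m))
     \<le> op_norm d (mat_sub mat_id A) ^ m *
        ((exp (\<theta> * t0) + exp (- lam * t0) * (\<Sum>z\<in>net2 d. exp (2 * Lam * qf n d z \<omega>) + exp (- (2 * Lam) * qf n d z \<omega>))) - 1)"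
proof -
  define e where "e = op_norm d (mat_sub mat_id A)"
  define a where "a = op_norm d A"
  define E where "E = mat_sub (emp_cov n d \<omega>) mat_id"
  define X where "X = op_norm d E"
  define Q where "Q = Max ((\<lambda>z. \<bar>qf n d z \<omega>\<bar>) ` net2 d)"
  have e0: "0 < e" using e by (simp add: e_def)
  have a0: "0 \<le> a" and X0: "0 \<le> X" using opn_nonneg[OF d] by (auto simp: a_def X_def)
  have th0: "0 \<le> \<theta>" unfolding th using a0 e0 by (simp add: e_def[symmetric] a_def[symmetric])
  have fin: "finite ((\<lambda>z. \<bar>qf n d z \<omega>\<bar>) ` net2 d)" using finite_net2 by simp
  have ne: "(\<lambda>z. \<bar>qf n d z \<omega>\<bar>) ` net2 d \<noteq> {}" using net2_ne[OF d] by simp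
  obtain z0 where z0: "z0 \<in> net2 d" "Q = \<bar>qf n d z0 \<omega>\<bar>"
    using Max_in[OF fin ne] unfolding Q_def by auto
  have Q0: "0 \<le> Q" using z0 by simp
  have Qge: "\<bar>qf n d z \<omega>\<bar> \<le> Q" if "z \<in> net2 d" for z
    unfolding Q_def using fin that by (intro Max_ge) auto
  have XQ: "X \<le> 2 * Q" unfolding X_def E_def
  proof (rule net_opn[OF d sym_E Q0])
    show "\<And>v. nv d v = 1 \<Longrightarrow> \<exists>z\<in>net2 d. nv d (\<lambda>i. v i - z i) \<le> 1/8 \<and> nv d z \<le> 9/8"
      by (rule net2_prop[OF d])
    fix z assume "z \<in> net2 d"
    then show "\<bar>bil d z (mat_sub (emp_cov n d \<omega>) mat_id) z\<bar> \<le> Q" using Qge bil_qf[OF n] by simp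
  qed
  have db: "op_norm d (mat_sub (mat_mult d (mat_mult d (mat_pow d (mat_sub mat_id (mat_mult d (emp_cov n d \<omega>) A)) i) (emp_cov n d \<omega>))
                              (mat_pow d (mat_sub mat_id (mat_mult d (emp_cov n d \<omega>) A)) j)) (mat_pow d (mat_sub mat_id A) m))
     \<le> (e + X * a) ^ m * (1 + X) - e ^ m"
    using det_bound[OF d ij, of "emp_cov n d \<omega>" A] unfolding e_def X_def E_def a_def .
  have ex: "(e + X * a) ^ m * (1 + X) \<le> e ^ m * exp (\<theta> * X)"
  proof -
    have "e + X * a = e * (1 + (a / e) * X)" using e0 by (simp add: field_simps)
    also have "\<dots> \<le> e * exp ((a / e) * X)" using e0 by (intro mult_left_mono exp_ge_add_one_self) auto
    finally have "e + X * a \<le> e * exp ((a / e) * X)" .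
    then have "(e + X * a) ^ m \<le> (e * exp ((a / e) * X)) ^ m"
      using e0 a0 X0 by (intro power_mono) auto
    also have "\<dots> = e ^ m * exp (real m * (a / e) * X)"
      by (simp add: power_mult_distrib exp_of_nat_mult[symmetric] mult.assoc)
    finally have p1: "(e + X * a) ^ m \<le> e ^ m * exp (real m * (a / e) * X)" .
    have p2: "1 + X \<le> exp X" by (rule exp_ge_add_one_self)
    have "(e + X * a) ^ m * (1 + X) \<le> e ^ m * exp (real m * (a / e) * X) * exp X"
      using p1 p2 X0 e0 a0 by (intro mult_mono) auto
    also have "\<dots> = e ^ m * exp (\<theta> * X)"
      unfolding th e_def[symmetric] a_def[symmetric] by (simp add: mult_exp_exp algebra_simps)
    finally show ?thesis .
  qed
  have m1: "exp (\<theta> * X) \<le> exp (\<theta> * (2 * Q))"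
    using XQ th0 by (simp add: mult_left_mono)
  have m2: "exp (\<theta> * (2 * Q)) \<le> exp (\<theta> * t0) + exp (- lam * t0) * exp (Lam * (2 * Q))"
  proof (cases "2 * Q \<le> t0")
    case True
    then have "exp (\<theta> * (2 * Q)) \<le> exp (\<theta> * t0)" using th0 by (simp add: mult_left_mono)
    then show ?thesis by (simp add: add_increasing2)
  next
    case False
    have "exp (\<theta> * (2 * Q)) = exp (- lam * (2 * Q)) * exp (Lam * (2 * Q))"
      unfolding La by (simp add: mult_exp_exp algebra_simps)
    also have "\<dots> \<le> exp (- lam * t0) * exp (Lam * (2 * Q))"
      using False la by (intro mult_right_mono) (auto simp: mult_left_mono)
    finally show ?thesis by (simp add: add_increasing)
  qed
  have m3: "exp (Lam * (2 * Q)) \<le> (\<Sum>z\<in>net2 d. exp (2 * Lam * qf n d z \<omega>) + exp (- (2 * Lam) * qf n d z \<omega>))"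
  proof -
    have "exp (Lam * (2 * Q)) = exp ((2 * Lam) * \<bar>qf n d z0 \<omega>\<bar>)" using z0 by (simp add: ac_simps)
    also have "\<dots> \<le> exp (2 * Lam * qf n d z0 \<omega>) + exp (- (2 * Lam) * qf n d z0 \<omega>)" by (rule exp_abs_le)
    also have "\<dots> \<le> (\<Sum>z\<in>net2 d. exp (2 * Lam * qf n d z \<omega>) + exp (- (2 * Lam) * qf n d z \<omega>))"
      by (rule member_le_sum[OF z0(1)]) (auto intro: add_nonneg_nonneg finite_net2)
    finally show ?thesis .
  qed
  have "exp (\<theta> * X) \<le> exp (\<theta> * t0) + exp (- lam * t0) * (\<Sum>z\<in>net2 d. exp (2 * Lam * qf n d z \<omega>) + exp (- (2 * Lam) * qf n d z \<omega>))"
    using m1 m2 m3 by (smt (verit) exp_gt_zero mult_left_mono)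
  then have "e ^ m * exp (\<theta> * X) \<le> e ^ m * (exp (\<theta> * t0) + exp (- lam * t0) * (\<Sum>z\<in>net2 d. exp (2 * Lam * qf n d z \<omega>) + exp (- (2 * Lam) * qf n d z \<omega>)))"
    using e0 by (intro mult_left_mono) auto
  then show ?thesis using db ex unfolding e_def by (simp add: right_diff_distrib)
qed

lemma core:
  assumes d: "0 < d" and n: "0 < n" and ij: "i + j = m"
    and e: "0 < op_norm d (mat_sub mat_id A)"
    and th: "\<theta> = real m * op_norm d A / op_norm d (mat_sub mat_id A) + 1"
    and la: "0 \<le> lam" and La: "Lam = \<theta> + lam" and t0: "0 \<le> t0"
    and Lb: "4 * Lam \<le> real n / 4"
  shows "\<exists>\<Delta>. (\<forall>p<d. \<forall>q<d.
         mat_expect n d (\<lambda>\<omega>. mat_mult d (mat_mult d (mat_pow d (mat_sub mat_id (mat_mult d (emp_cov n d \<omega>) A)) i)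
                                          (emp_cov n d \<omega>))
                                (mat_pow d (mat_sub mat_id (mat_mult d (emp_cov n d \<omega>) A)) j)) p q
         = mat_pow d (mat_sub mat_id A) m p q
           + op_norm d (mat_sub mat_id A) ^ m * \<Delta> p q)
       \<and> op_norm d \<Delta> \<le> exp (\<theta> * t0) - 1 + exp (- lam * t0) * (2 * exp (11 * real d) * exp (64 * Lam\<^sup>2 / real n))"
proof -
  let ?M = "gauss_samples n d"
  interpret prob_space ?M by (rule gs_prob)
  define e where "e = op_norm d (mat_sub mat_id A)"
  define Bm where "Bm = mat_pow d (mat_sub mat_id A) m"
  define P where "P = (\<lambda>\<omega>. mat_mult d (mat_mult d (mat_pow d (mat_sub mat_id (mat_mult d (emp_cov n d \<omega>) A)) i)
                                          (emp_cov n d \<omega>))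
                                (mat_pow d (mat_sub mat_id (mat_mult d (emp_cov n d \<omega>) A)) j))"
  define G where "G = (\<lambda>\<omega>. exp (\<theta> * t0) + exp (- lam * t0) * (\<Sum>z\<in>net2 d. exp (2 * Lam * qf n d z \<omega>) + exp (- (2 * Lam) * qf n d z \<omega>)))"
  define K where "K = exp (\<theta> * t0) - 1 + exp (- lam * t0) * (2 * exp (11 * real d) * exp (64 * Lam\<^sup>2 / real n))"
  have e0: "0 < e" using e by (simp add: e_def)
  have a0: "0 \<le> op_norm d A" using opn_nonneg[OF d] by simp
  have th0: "1 \<le> \<theta>" unfolding th using a0 e by simp
  have La0: "0 \<le> Lam" using th0 la La by simp
  have pw: "op_norm d (mat_sub (P \<omega>) Bm) \<le> e ^ m * (G \<omega> - 1)" for \<omega>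
    unfolding P_def Bm_def G_def e_def by (rule pointwise[OF d n ij e th la La])
  have G1: "1 \<le> G \<omega>" for \<omega>
  proof -
    have "1 \<le> exp (\<theta> * t0)" using th0 t0 by simp
    moreover have "0 \<le> exp (- lam * t0) * (\<Sum>z\<in>net2 d. exp (2 * Lam * qf n d z \<omega>) + exp (- (2 * Lam) * qf n d z \<omega>))"
      by (intro mult_nonneg_nonneg sum_nonneg add_nonneg_nonneg) auto
    ultimately show ?thesis unfolding G_def by linarith
  qed
  have F: "integrable ?M (\<lambda>\<omega>. exp (\<mu> * qf n d z \<omega>)) \<and> (\<integral>\<omega>. exp (\<mu> * qf n d z \<omega>) \<partial>?M) \<le> exp (64 * Lam\<^sup>2 / real n)"
    if z: "z \<in> net2 d" and mu: "\<bar>\<mu>\<bar> \<le> 2 * Lam" for z \<mu>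
  proof -
    define r where "r = (\<Sum>j<d. (z j)\<^sup>2)"
    have r0: "0 \<le> r" unfolding r_def by (simp add: sum_nonneg)
    have r2: "r \<le> 2" unfolding r_def by (rule net2_r[OF z])
    have "\<bar>\<mu>\<bar> * r \<le> (2 * Lam) * 2" using mu r0 r2 La0 by (intro mult_mono) auto
    then have mr: "\<bar>\<mu>\<bar> * r \<le> real n / 4" using Lb by linarith
    have M: "integrable ?M (\<lambda>\<omega>. exp (\<mu> * qf n d z \<omega>))
      \<and> (\<integral>\<omega>. exp (\<mu> * qf n d z \<omega>) \<partial>?M) \<le> exp (4 * \<mu>\<^sup>2 * r\<^sup>2 / real n)"
      by (rule mgf_q[OF n d r_def mr])
    have "\<mu>\<^sup>2 \<le> (2 * Lam)\<^sup>2" using mu by (metis abs_le_square_iff abs_of_nonneg La0 mult_nonneg_nonneg zero_le_numeral)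
    moreover have "r\<^sup>2 \<le> 2\<^sup>2" using r0 r2 by (intro power_mono) auto
    ultimately have "\<mu>\<^sup>2 * r\<^sup>2 \<le> (2 * Lam)\<^sup>2 * 2\<^sup>2" by (intro mult_mono) auto
    then have "4 * \<mu>\<^sup>2 * r\<^sup>2 / real n \<le> 64 * Lam\<^sup>2 / real n"
      using n by (intro divide_right_mono) (auto simp: power2_eq_square)
    then show ?thesis using M by (meson exp_le_cancel_iff order_trans)
  qed
  have Fp: "integrable ?M (\<lambda>\<omega>. exp (2 * Lam * qf n d z \<omega>))" "integrable ?M (\<lambda>\<omega>. exp (- (2 * Lam) * qf n d z \<omega>))"
    if "z \<in> net2 d" for z
    using F[OF that, of "2 * Lam"] F[OF that, of "- (2 * Lam)"] La0 by auto
  have intS: "integrable ?M (\<lambda>\<omega>. \<Sum>z\<in>net2 d. exp (2 * Lam * qf n d z \<omega>) + exp (- (2 * Lam) * qf n d z \<omega>))"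
    by (rule Bochner_Integration.integrable_sum, rule Bochner_Integration.integrable_add) (use Fp in auto)
  have intG: "integrable ?M G" unfolding G_def
    by (rule Bochner_Integration.integrable_add, simp, rule Bochner_Integration.integrable_mult_right, rule intS)
  have intS_le: "(\<integral>\<omega>. (\<Sum>z\<in>net2 d. exp (2 * Lam * qf n d z \<omega>) + exp (- (2 * Lam) * qf n d z \<omega>)) \<partial>?M)
      \<le> 2 * exp (11 * real d) * exp (64 * Lam\<^sup>2 / real n)"
  proof -
    have "(\<integral>\<omega>. (\<Sum>z\<in>net2 d. exp (2 * Lam * qf n d z \<omega>) + exp (- (2 * Lam) * qf n d z \<omega>)) \<partial>?M)
        = (\<Sum>z\<in>net2 d. (\<integral>\<omega>. exp (2 * Lam * qf n d z \<omega>) \<partial>?M) + (\<integral>\<omega>. exp (- (2 * Lam) * qf n d z \<omega>) \<partial>?M))"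
      using Fp by (subst Bochner_Integration.integral_sum) (auto intro: Bochner_Integration.integrable_add)
    also have "\<dots> \<le> (\<Sum>z\<in>net2 d. 2 * exp (64 * Lam\<^sup>2 / real n))"
    proof (rule sum_mono)
      fix z assume z: "z \<in> net2 d"
      show "(\<integral>\<omega>. exp (2 * Lam * qf n d z \<omega>) \<partial>?M) + (\<integral>\<omega>. exp (- (2 * Lam) * qf n d z \<omega>) \<partial>?M) \<le> 2 * exp (64 * Lam\<^sup>2 / real n)"
        using F[OF z, of "2 * Lam"] F[OF z, of "- (2 * Lam)"] La0 by auto
    qed
    also have "\<dots> = real (card (net2 d)) * (2 * exp (64 * Lam\<^sup>2 / real n))" by simp
    also have "\<dots> \<le> exp (11 * real d) * (2 * exp (64 * Lam\<^sup>2 / real n))"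
      by (rule mult_right_mono[OF card_net2]) simp
    finally show ?thesis by simp
  qed
  have intG_le: "(\<integral>\<omega>. G \<omega> \<partial>?M) - 1 \<le> K"
  proof -
    have "(\<integral>\<omega>. G \<omega> \<partial>?M) = exp (\<theta> * t0) + exp (- lam * t0) * (\<integral>\<omega>. (\<Sum>z\<in>net2 d. exp (2 * Lam * qf n d z \<omega>) + exp (- (2 * Lam) * qf n d z \<omega>)) \<partial>?M)"
      unfolding G_def using intS by (simp add: prob_space)
    then show ?thesis unfolding K_def using intS_le by (simp add: mult_left_mono)
  qed
  have mP: "mmeas d ?M P" unfolding P_def
    by (intro mmeas_mult mmeas_pow mmeas_sub mmeas_S mmeas_const)
  have entry: "\<bar>P \<omega> p q - Bm p q\<bar> \<le> e ^ m * (G \<omega> - 1)" if "p < d" "q < d" for \<omega> p q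
  proof -
    have "\<bar>mat_sub (P \<omega>) Bm p q\<bar> \<le> op_norm d (mat_sub (P \<omega>) Bm)" by (rule entry_le[OF that])
    then show ?thesis using pw[of \<omega>] by (simp add: mat_sub_def)
  qed
  have intP: "integrable ?M (\<lambda>\<omega>. P \<omega> p q)" if pq: "p < d" "q < d" for p q
  proof (rule Bochner_Integration.integrable_bound)
    show "integrable ?M (\<lambda>\<omega>. \<bar>Bm p q\<bar> + e ^ m * (G \<omega> - 1))"
      using intG by (intro Bochner_Integration.integrable_add Bochner_Integration.integrable_mult_right Bochner_Integration.integrable_diff) auto
    show "(\<lambda>\<omega>. P \<omega> p q) \<in> borel_measurable ?M" using mP pq by (simp add: mmeas_def)
    show "AE \<omega> in ?M. norm (P \<omega> p q) \<le> norm (\<bar>Bm p q\<bar> + e ^ m * (G \<omega> - 1))"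
    proof (rule AE_I2)
      fix \<omega>
      have "0 \<le> e ^ m * (G \<omega> - 1)" using G1[of \<omega>] e0 by simp
      then show "norm (P \<omega> p q) \<le> norm (\<bar>Bm p q\<bar> + e ^ m * (G \<omega> - 1))"
        using entry[OF pq, of \<omega>] by simp
    qed
  qed
  define \<Delta> where "\<Delta> = (\<lambda>p q. (mat_expect n d P p q - Bm p q) / e ^ m)"
  have eq: "mat_expect n d P p q = Bm p q + e ^ m * \<Delta> p q" for p q
    unfolding \<Delta>_def using e0 by simp
  have K0: "0 \<le> (\<integral>\<omega>. G \<omega> \<partial>?M) - 1"
  proof -
    have "(\<integral>\<omega>. 1 \<partial>?M) \<le> (\<integral>\<omega>. G \<omega> \<partial>?M)" using G1 intG by (intro Bochner_Integration.integral_mono) auto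
    then show ?thesis by (simp add: prob_space)
  qed
  have nD: "op_norm d \<Delta> \<le> (\<integral>\<omega>. G \<omega> \<partial>?M) - 1"
  proof (rule opn_le_bil[OF d K0])
    fix v w assume v: "nv d v = 1" and w: "nv d w = 1"
    define h where "h = (\<lambda>\<omega>. \<Sum>p<d. \<Sum>q<d. w p * (P \<omega> p q - Bm p q) * v q)"
    have hint: "integrable ?M (\<lambda>\<omega>. w p * (P \<omega> p q - Bm p q) * v q)" if "p < d" "q < d" for p q
      using intP[OF that] by (intro Bochner_Integration.integrable_mult_left Bochner_Integration.integrable_mult_right Bochner_Integration.integrable_diff) auto
    have hI: "(\<integral>\<omega>. h \<omega> \<partial>?M) = (\<Sum>p<d. \<Sum>q<d. w p * (mat_expect n d P p q - Bm p q) * v q)"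
    proof -
      have "(\<integral>\<omega>. h \<omega> \<partial>?M) = (\<Sum>p<d. \<integral>\<omega>. (\<Sum>q<d. w p * (P \<omega> p q - Bm p q) * v q) \<partial>?M)"
        unfolding h_def using hint by (subst Bochner_Integration.integral_sum) (auto intro!: Bochner_Integration.integrable_sum)
      also have "\<dots> = (\<Sum>p<d. \<Sum>q<d. \<integral>\<omega>. w p * (P \<omega> p q - Bm p q) * v q \<partial>?M)"
        using hint by (intro sum.cong refl, subst Bochner_Integration.integral_sum) auto
      also have "\<dots> = (\<Sum>p<d. \<Sum>q<d. w p * (mat_expect n d P p q - Bm p q) * v q)"
      proof (intro sum.cong refl)
        fix p q assume "p \<in> {..<d}" "q \<in> {..<d}"
        then have pq: "p < d" "q < d" by auto
        show "(\<integral>\<omega>. w p * (P \<omega> p q - Bm p q) * v q \<partial>?M) = w p * (mat_expect n d P p q - Bm p q) * v q"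
          using intP[OF pq] by (simp add: mat_expect_def prob_space)
      qed
      finally show ?thesis .
    qed
    have bD: "bil d w \<Delta> v = (1 / e ^ m) * (\<integral>\<omega>. h \<omega> \<partial>?M)"
      unfolding hI bil_def mv_def \<Delta>_def
      by (simp add: sum_distrib_left sum_divide_distrib algebra_simps diff_divide_distrib)
    have hb: "\<bar>h \<omega>\<bar> \<le> e ^ m * (G \<omega> - 1)" for \<omega>
    proof -
      have "h \<omega> = bil d w (mat_sub (P \<omega>) Bm) v"
        unfolding h_def bil_expand mat_sub_def by (simp add: ac_simps)
      then have "\<bar>h \<omega>\<bar> \<le> nv d w * op_norm d (mat_sub (P \<omega>) Bm) * nv d v"
        using abs_bil_le[OF d] by simp
      then show ?thesis using v w pw[of \<omega>] by simp
    qed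
    have inth: "integrable ?M h" unfolding h_def using hint by (auto intro!: Bochner_Integration.integrable_sum)
    have "\<bar>\<integral>\<omega>. h \<omega> \<partial>?M\<bar> \<le> (\<integral>\<omega>. \<bar>h \<omega>\<bar> \<partial>?M)" by (rule Bochner_Integration.integral_abs_bound)
    also have "\<dots> \<le> (\<integral>\<omega>. e ^ m * (G \<omega> - 1) \<partial>?M)"
      using inth intG hb by (intro Bochner_Integration.integral_mono) auto
    also have "\<dots> = e ^ m * ((\<integral>\<omega>. G \<omega> \<partial>?M) - 1)"
      using intG by (simp add: prob_space)
    finally have "\<bar>\<integral>\<omega>. h \<omega> \<partial>?M\<bar> \<le> e ^ m * ((\<integral>\<omega>. G \<omega> \<partial>?M) - 1)" .
    then show "\<bar>bil d w \<Delta> v\<bar> \<le> (\<integral>\<omega>. G \<omega> \<partial>?M) - 1"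
      unfolding bD using e0 by (simp add: abs_mult field_simps)
  qed
  show ?thesis
    apply (rule exI[of _ \<Delta>])
    using eq nD intG_le unfolding P_def Bm_def e_def K_def by auto
qed

lemma exp_small: fixes x :: real assumes "0 \<le> x" "x \<le> 1/2" shows "exp x \<le> 1 + 2 * x"
proof -
  have a: "1 - x \<le> exp (- x)" using exp_ge_add_one_self[of "- x"] by simp
  have p: "0 < 1 - x" using assms by simp
  have "exp x = 1 / exp (- x)" by (simp add: exp_minus divide_inverse)
  also have "\<dots> \<le> 1 / (1 - x)" using a p by (intro divide_left_mono) auto
  also have "\<dots> \<le> 1 + 2 * x"
  proof -
    have "1 \<le> (1 + 2 * x) * (1 - x)" using assms by (simp add: algebra_simps power2_eq_square) (smt (verit) mult_left_le)
    then show ?thesis using p by (simp add: divide_le_eq)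
  qed
  finally show ?thesis .
qed

lemma numer:
  fixes D L u \<theta> l :: real
  assumes l: "l = ln D" and D: "exp 3000 \<le> D" and L: "1 \<le> L" and u: "0 < u" and Lu: "L * l * u \<le> 1"
    and th0: "0 \<le> \<theta>" and th: "\<theta> \<le> 2 / (l * u) + 3 * L"
  shows "4 * (\<theta> + D / u) \<le> (D / u\<^sup>2) / 4"
    and "exp (\<theta> * (300 * u)) - 1 + exp (- (D / u) * (300 * u)) * (2 * exp (11 * D) * exp (64 * (\<theta> + D / u)\<^sup>2 / (D / u\<^sup>2))) \<le> 3001 / l"
proof -
  have Dpos: "0 < D" using D by (meson exp_gt_zero less_le_trans)
  have l3: "3000 \<le> l" unfolding l using D Dpos by (metis exp_le_cancel_iff exp_ln)
  have l0: "0 < l" using l3 by simp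
  have lu: "0 < l * u" using l0 u by simp
  have D1: "3001 \<le> D" using D exp_ge_add_one_self[of 3000] by linarith
  have Lu2: "L * u \<le> 1 / l" using Lu l0 by (simp add: field_simps)
  have u1: "u \<le> 1 / 3000"
  proof -
    have "u \<le> L * u" using L u by simp
    also have "\<dots> \<le> 1 / l" by (rule Lu2)
    also have "\<dots> \<le> 1 / 3000" using l3 by (simp add: divide_left_mono)
    finally show ?thesis .
  qed
  have L3: "3 * L \<le> 3 / (l * u)" using Lu2 u l0 by (simp add: field_simps)
  have thb: "\<theta> \<le> 5 / (l * u)" using th L3 by simp
  have fiv: "5 / (l * u) \<le> 1 / u"
    using l3 u by (simp add: field_simps)
  have Lam: "\<theta> + D / u \<le> 2 * D / u"
  proof -
    have "\<theta> + D / u \<le> 1 / u + D / u" using thb fiv by simp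
    also have "\<dots> \<le> 2 * D / u" using D1 u by (simp add: field_simps)
    finally show ?thesis .
  qed
  have Lam0: "0 \<le> \<theta> + D / u" using th0 Dpos u by simp
  show "4 * (\<theta> + D / u) \<le> (D / u\<^sup>2) / 4"
  proof -
    have "4 * (\<theta> + D / u) \<le> 8 * D / u" using Lam by simp
    also have "\<dots> \<le> (D / u\<^sup>2) / 4"
    proof -
      have "32 * u \<le> 1" using u1 by simp
      then have "8 * D * u \<le> D / 4" using Dpos by (simp add: mult.commute mult.left_commute)
      then show ?thesis using u Dpos by (simp add: field_simps power2_eq_square)
    qed
    finally show ?thesis .
  qed
  have t1: "\<theta> * (300 * u) \<le> 1500 / l"
  proof -
    have "\<theta> * (300 * u) \<le> (2 / (l * u) + 3 * L) * (300 * u)" using th u by (intro mult_right_mono) auto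
    also have "\<dots> = 600 / l + 900 * (L * u)" using u l0 by (simp add: field_simps)
    also have "\<dots> \<le> 600 / l + 900 * (1 / l)" using Lu2 by simp
    finally show ?thesis by simp
  qed
  have t1h: "1500 / l \<le> 1 / 2" using l3 by (simp add: field_simps)
  have tt0: "0 \<le> \<theta> * (300 * u)" using th0 u by simp
  have e1: "exp (\<theta> * (300 * u)) - 1 \<le> 3000 / l"
    using exp_small[OF tt0] t1 t1h by simp
  have e2: "exp (- (D / u) * (300 * u)) = exp (- 300 * D)" using u by simp
  have e3: "64 * (\<theta> + D / u)\<^sup>2 / (D / u\<^sup>2) \<le> 256 * D"
  proof -
    have "(\<theta> + D / u)\<^sup>2 \<le> (2 * D / u)\<^sup>2" using Lam Lam0 by (intro power_mono) auto
    then have "64 * (\<theta> + D / u)\<^sup>2 / (D / u\<^sup>2) \<le> 64 * (2 * D / u)\<^sup>2 / (D / u\<^sup>2)"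
      using Dpos u by (intro divide_right_mono) auto
    also have "\<dots> = 256 * D" using Dpos u by (simp add: field_simps power2_eq_square)
    finally show ?thesis .
  qed
  have "exp (- (D / u) * (300 * u)) * (2 * exp (11 * D) * exp (64 * (\<theta> + D / u)\<^sup>2 / (D / u\<^sup>2)))
      \<le> exp (- 300 * D) * (2 * exp (11 * D) * exp (256 * D))"
    unfolding e2 using e3 by (intro mult_left_mono) auto
  also have "\<dots> = 2 * exp (- 300 * D + 11 * D + 256 * D)" by (simp only: exp_add ac_simps)
  also have "\<dots> = 2 * exp (- 33 * D)" by simp
  also have "\<dots> \<le> 1 / l"
  proof -
    have "l \<le> D" unfolding l using Dpos ln_less_self[of D] by linarith
    also have "D \<le> exp D" using exp_ge_add_one_self[of D] by linarith
    also have "exp D \<le> exp (33 * D) / 2"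
    proof -
      have "exp (33 * D) = exp D * exp (32 * D)" by (simp add: mult_exp_exp)
      moreover have "2 \<le> exp (32 * D)" using exp_ge_add_one_self[of "32 * D"] D1 by linarith
      ultimately show ?thesis by simp
    qed
    finally have "2 * l \<le> exp (33 * D)" by simp
    moreover have E: "exp (- 33 * D) = 1 / exp (33 * D)"
      by (metis exp_minus minus_mult_left inverse_eq_divide)
    ultimately have le: "2 * l \<le> exp (33 * D)" by simp
    have "2 * exp (- 33 * D) = 2 / exp (33 * D)" unfolding E by simp
    also have "\<dots> \<le> 2 / (2 * l)" by (rule divide_left_mono[OF le]) (use l0 in auto)
    also have "\<dots> = 1 / l" by simp
    finally show ?thesis .
  qed
  finally show "exp (\<theta> * (300 * u)) - 1 + exp (- (D / u) * (300 * u)) * (2 * exp (11 * D) * exp (64 * (\<theta> + D / u)\<^sup>2 / (D / u\<^sup>2))) \<le> 3001 / l"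
    using e1 by simp
qed

theorem lemmaA4:
  shows "\<exists>C0 (k::nat) c C1 (d0::nat). \<forall>d n L A i.
     d \<ge> d0 \<longrightarrow> L \<ge> 1 \<longrightarrow>
     real n \<ge> C0 * real d * real L ^ 2 * (ln (real d)) ^ k \<longrightarrow>
     sym_mat d A \<longrightarrow>
     op_norm d (mat_sub mat_id A) \<ge> c * sqrt (real L ^ 2 * real d * (ln (real d))\<^sup>2 / real n) \<longrightarrow>
     i \<le> 2 * L - 1 \<longrightarrow>
     (\<exists>\<Delta>. (\<forall>p<d. \<forall>q<d.
         mat_expect n d (\<lambda>\<omega>. mat_mult d (mat_mult d (mat_pow d (mat_sub mat_id (mat_mult d (emp_cov n d \<omega>) A)) i)
                                          (emp_cov n d \<omega>))
                                (mat_pow d (mat_sub mat_id (mat_mult d (emp_cov n d \<omega>) A)) (2 * L - 1 - i))) p q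
         = mat_pow d (mat_sub mat_id A) (2 * L - 1) p q
           + op_norm d (mat_sub mat_id A) ^ (2 * L - 1) * \<Delta> p q)
       \<and> op_norm d \<Delta> \<le> C1 / ln (real d))"
proof -
  have main: "\<forall>d n L A i.
     d \<ge> nat \<lceil>exp (3000::real)\<rceil> \<longrightarrow> L \<ge> 1 \<longrightarrow>
     real n \<ge> 1 * real d * real L ^ 2 * (ln (real d)) ^ 2 \<longrightarrow>
     sym_mat d A \<longrightarrow>
     op_norm d (mat_sub mat_id A) \<ge> 1 * sqrt (real L ^ 2 * real d * (ln (real d))\<^sup>2 / real n) \<longrightarrow>
     i \<le> 2 * L - 1 \<longrightarrow>
     (\<exists>\<Delta>. (\<forall>p<d. \<forall>q<d.
         mat_expect n d (\<lambda>\<omega>. mat_mult d (mat_mult d (mat_pow d (mat_sub mat_id (mat_mult d (emp_cov n d \<omega>) A)) i)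
                                          (emp_cov n d \<omega>))
                                (mat_pow d (mat_sub mat_id (mat_mult d (emp_cov n d \<omega>) A)) (2 * L - 1 - i))) p q
         = mat_pow d (mat_sub mat_id A) (2 * L - 1) p q
           + op_norm d (mat_sub mat_id A) ^ (2 * L - 1) * \<Delta> p q)
       \<and> op_norm d \<Delta> \<le> 3001 / ln (real d))"
  proof (intro allI impI)
    fix d n L :: nat and A :: "nat \<Rightarrow> nat \<Rightarrow> real" and i :: nat
    assume hd: "nat \<lceil>exp (3000::real)\<rceil> \<le> d" and hL: "1 \<le> L"
      and hn: "1 * real d * real L ^ 2 * (ln (real d)) ^ 2 \<le> real n"
      and hA: "sym_mat d A"
      and he: "1 * sqrt (real L ^ 2 * real d * (ln (real d))\<^sup>2 / real n) \<le> op_norm d (mat_sub mat_id A)"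
      and hi: "i \<le> 2 * L - 1"
    define D where "D = real d"
    define l where "l = ln D"
    define Lr where "Lr = real L"
    have D: "exp 3000 \<le> D"
    proof -
      have a: "exp 3000 \<le> real_of_int \<lceil>exp (3000::real)\<rceil>" by (rule le_of_int_ceiling)
      have "0 < real_of_int \<lceil>exp (3000::real)\<rceil>" using a exp_gt_zero[of "3000::real"] by linarith
      then have c0: "0 \<le> \<lceil>exp (3000::real)\<rceil>" by linarith
      have b: "real (nat \<lceil>exp (3000::real)\<rceil>) = real_of_int \<lceil>exp (3000::real)\<rceil>" using c0 by simp
      have c: "real (nat \<lceil>exp (3000::real)\<rceil>) \<le> real d" using hd by (simp only: of_nat_le_iff)
      show "exp 3000 \<le> D" using a b c unfolding D_def by linarith
    qed
    have Dpos: "0 < D" using D by (meson exp_gt_zero less_le_trans)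
    have d0: "0 < d" using Dpos unfolding D_def by simp
    have l3: "3000 \<le> l" unfolding l_def using D Dpos by (metis exp_le_cancel_iff exp_ln)
    have l0: "0 < l" using l3 by simp
    have Lr1: "1 \<le> Lr" unfolding Lr_def using hL by simp
    have npos: "0 < real n"
    proof -
      have "0 < D * Lr ^ 2 * l ^ 2" using Dpos Lr1 l0 by simp
      then show ?thesis using hn unfolding D_def[symmetric] Lr_def[symmetric] l_def[symmetric] by simp
    qed
    then have n0: "0 < n" by simp
    define u where "u = sqrt (D / real n)"
    have u0: "0 < u" unfolding u_def using Dpos npos by simp
    have u2: "u\<^sup>2 = D / real n" unfolding u_def using Dpos npos by simp
    have nD: "D / u\<^sup>2 = real n" using u2 Dpos npos by simp
    have sq: "sqrt (real L ^ 2 * real d * (ln (real d))\<^sup>2 / real n) = Lr * l * u"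
    proof -
      have eq: "real L ^ 2 * real d * (ln (real d))\<^sup>2 / real n = (Lr * l)\<^sup>2 * (D / real n)"
        unfolding Lr_def l_def D_def by (simp add: power_mult_distrib)
      have "sqrt (real L ^ 2 * real d * (ln (real d))\<^sup>2 / real n) = sqrt ((Lr * l)\<^sup>2) * sqrt (D / real n)"
        unfolding eq by (rule real_sqrt_mult)
      also have "sqrt ((Lr * l)\<^sup>2) = Lr * l" using Lr1 l0 by simp
      finally show ?thesis unfolding u_def .
    qed
    have Lu: "Lr * l * u \<le> 1"
    proof -
      have "(Lr * l * u)\<^sup>2 = (Lr * l)\<^sup>2 * D / real n" using u2 by (simp add: power_mult_distrib)
      also have "\<dots> \<le> 1"
        using hn npos unfolding D_def[symmetric] Lr_def[symmetric] l_def[symmetric]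
        by (simp add: power_mult_distrib divide_le_eq ac_simps)
      finally have "(Lr * l * u)\<^sup>2 \<le> 1\<^sup>2" by simp
      then show ?thesis by (rule power2_le_imp_le) simp
    qed
    define e where "e = op_norm d (mat_sub mat_id A)"
    have eb: "Lr * l * u \<le> e" using he sq unfolding e_def by simp
    have e0: "0 < e" using eb Lr1 l0 u0 by (smt (verit) mult_pos_pos)
    define a where "a = op_norm d A"
    have a0: "0 \<le> a" using opn_nonneg[OF d0] by (simp add: a_def)
    have ae: "a \<le> 1 + e"
    proof -
      have "A = mat_sub mat_id (mat_sub mat_id A)" by (auto simp: mat_sub_def)
      then have "a = op_norm d (mat_sub mat_id (mat_sub mat_id A))" unfolding a_def by simp
      also have "\<dots> \<le> op_norm d mat_id + e" unfolding e_def by (rule opn_sub[OF d0])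
      also have "\<dots> \<le> 1 + e" using opn_id[OF d0] by simp
      finally show ?thesis .
    qed
    define m where "m = 2 * L - 1"
    have mL: "real m \<le> 2 * Lr" unfolding m_def Lr_def using hL by simp
    define \<theta> where "\<theta> = real m * a / e + 1"
    have th0: "0 \<le> \<theta>" unfolding \<theta>_def using a0 e0 by simp
    have thb: "\<theta> \<le> 2 / (l * u) + 3 * Lr"
    proof -
      have "real m * a / e \<le> 2 * Lr * (1 + e) / e"
        using mL a0 ae e0 Lr1 by (intro divide_right_mono mult_mono) auto
      also have "\<dots> = 2 * Lr / e + 2 * Lr" using e0 by (simp add: field_simps)
      also have "2 * Lr / e \<le> 2 * Lr / (Lr * l * u)"
        using eb Lr1 l0 u0 e0 by (intro divide_left_mono) (auto intro!: mult_pos_pos)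
      also have "2 * Lr / (Lr * l * u) = 2 / (l * u)" using Lr1 by simp
      finally have "real m * a / e \<le> 2 / (l * u) + 2 * Lr" by simp
      then show ?thesis unfolding \<theta>_def using Lr1 by simp
    qed
    note N = numer[OF l_def D Lr1 u0 Lu th0 thb]
    have core_app: "\<exists>\<Delta>. (\<forall>p<d. \<forall>q<d.
         mat_expect n d (\<lambda>\<omega>. mat_mult d (mat_mult d (mat_pow d (mat_sub mat_id (mat_mult d (emp_cov n d \<omega>) A)) i)
                                          (emp_cov n d \<omega>))
                                (mat_pow d (mat_sub mat_id (mat_mult d (emp_cov n d \<omega>) A)) (2 * L - 1 - i))) p q
         = mat_pow d (mat_sub mat_id A) m p q
           + op_norm d (mat_sub mat_id A) ^ m * \<Delta> p q)
       \<and> op_norm d \<Delta> \<le> exp (\<theta> * (300 * u)) - 1 + exp (- (D / u) * (300 * u)) * (2 * exp (11 * real d) * exp (64 * (\<theta> + D / u)\<^sup>2 / real n))"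
    proof (rule core[OF d0 n0])
      show "i + (2 * L - 1 - i) = m" unfolding m_def using hi by simp
      show "0 < op_norm d (mat_sub mat_id A)" using e0 by (simp add: e_def)
      show "\<theta> = real m * op_norm d A / op_norm d (mat_sub mat_id A) + 1" unfolding \<theta>_def a_def e_def ..
      show "0 \<le> D / u" using Dpos u0 by simp
      show "\<theta> + D / u = \<theta> + D / u" ..
      show "0 \<le> 300 * u" using u0 by simp
      show "4 * (\<theta> + D / u) \<le> real n / 4" using N(1) nD by simp
    qed
    then obtain \<Delta> where \<Delta>: "\<forall>p<d. \<forall>q<d.
         mat_expect n d (\<lambda>\<omega>. mat_mult d (mat_mult d (mat_pow d (mat_sub mat_id (mat_mult d (emp_cov n d \<omega>) A)) i)
                                          (emp_cov n d \<omega>))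
                                (mat_pow d (mat_sub mat_id (mat_mult d (emp_cov n d \<omega>) A)) (2 * L - 1 - i))) p q
         = mat_pow d (mat_sub mat_id A) m p q
           + op_norm d (mat_sub mat_id A) ^ m * \<Delta> p q"
      and nb: "op_norm d \<Delta> \<le> exp (\<theta> * (300 * u)) - 1 + exp (- (D / u) * (300 * u)) * (2 * exp (11 * real d) * exp (64 * (\<theta> + D / u)\<^sup>2 / real n))"
      by blast
    have "op_norm d \<Delta> \<le> 3001 / ln (real d)"
      using nb N(2) nD unfolding l_def D_def by simp
    then show "\<exists>\<Delta>. (\<forall>p<d. \<forall>q<d.
         mat_expect n d (\<lambda>\<omega>. mat_mult d (mat_mult d (mat_pow d (mat_sub mat_id (mat_mult d (emp_cov n d \<omega>) A)) i)
                                          (emp_cov n d \<omega>))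
                                (mat_pow d (mat_sub mat_id (mat_mult d (emp_cov n d \<omega>) A)) (2 * L - 1 - i))) p q
         = mat_pow d (mat_sub mat_id A) (2 * L - 1) p q
           + op_norm d (mat_sub mat_id A) ^ (2 * L - 1) * \<Delta> p q)
       \<and> op_norm d \<Delta> \<le> 3001 / ln (real d)"
      using \<Delta> unfolding m_def by blast
  qed
  show ?thesis
    apply (rule exI[of _ "1::real"], rule exI[of _ "2::nat"], rule exI[of _ "1::real"],
           rule exI[of _ "3001::real"], rule exI[of _ "nat \<lceil>exp (3000::real)\<rceil>"])
    using main by blast
qed

end
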